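(* Let $A$ be a Lagrange tensor along the geodesic $c:[t_0,t_1]\to M$ with base point $t_0$, and assume $R_t\ge0$ for all $t$ (e.g. $\sec_M\ge0$). Suppose there exists a nonzero $v\in E_{t_0}$ such that (a) $v$ is orthogonal to $\ker A_t$ for all $t\in[t_0,t_1]$ (so that $g_v$ is smooth on $[t_0,t_1]$), and (b) $g_v'(t_0)=g_v'(t_1)=0$. Then $w=A_t^{-1}A_t^{-*}v\in E_{t_0}$ is independent of the regular point $t$, $A_t'w=0$ for all $t\in[t_0,t_1]$, and $A_t^{-*}v=A_tw$ is a parallel Jacobi field along $c$.
   Context: $(M^{n+1},g)$ Riemannian, $c$ a unit-speed geodesic, $E_t=\dot c(t)^\perp$, $R_t(x)=R(x,\dot c)\dot c$ on $E_t$, $'=\nabla_{\dot c}$. A Lagrange tensor with base point $t_0$ is a smooth family of linear maps $A_t:E_{t_0}\to E_t$ with $A_t''+R_tA_t=0$, $\ker A_{t_0}\cap\ker A'_{t_0}=0$, and $\langle A_t'v,A_tw\rangle=\langle A_tv,A_t'w\rangle$ for all $t$, $v,w$. Regular points: $A_t$ invertible. $A_t^{-*}=(A_t^* )^{-1}$ with $A_t^*$ the adjoint. $g_v(t)=\|v\|^2/\|A_t^{-*}v\|$ at regular $t$, extended continuously; it is smooth wherever $v\perp\ker A_t$. *)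

theory Defs
  imports "HOL-Analysis.Analysis"
begin

text \<open>Everything is expressed in a parallel orthonormal frame along the geodesic c:
  E_t is identified with real^'n (n = dim M - 1), the covariant derivative along c
  becomes the ordinary derivative, R_t becomes a matrix-valued function.\<close>

definition deriv_tower_on :: "real set \<Rightarrow> (nat \<Rightarrow> real \<Rightarrow> 'a::real_normed_vector) \<Rightarrow> bool" where
  "deriv_tower_on S D \<longleftrightarrow>
     (\<forall>k. \<forall>t\<in>S. (D k has_vector_derivative D (Suc k) t) (at t within S))"

definition smooth_on_real :: "real set \<Rightarrow> (real \<Rightarrow> 'a::real_normed_vector) \<Rightarrow> bool" where
  "smooth_on_real S f \<longleftrightarrow> (\<exists>D. D 0 = f \<and> deriv_tower_on S D)"

text \<open>Lagrange tensor on [t0,t1] with base point t0, given with its tower of derivatives DA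
  (DA 0 = A, DA 1 = A', DA 2 = A'').\<close>
definition lagrange_tensor ::
  "real \<Rightarrow> real \<Rightarrow> (real \<Rightarrow> real^'n^'n) \<Rightarrow> (nat \<Rightarrow> real \<Rightarrow> real^'n^'n) \<Rightarrow> bool" where
  "lagrange_tensor t0 t1 R DA \<longleftrightarrow>
     deriv_tower_on {t0..t1} DA \<and>
     (\<forall>t\<in>{t0..t1}. DA 2 t + R t ** DA 0 t = 0) \<and>
     (\<forall>x. DA 0 t0 *v x = 0 \<and> DA 1 t0 *v x = 0 \<longrightarrow> x = 0) \<and>
     (\<forall>t\<in>{t0..t1}. \<forall>x y. (DA 1 t *v x) \<bullet> (DA 0 t *v y) = (DA 0 t *v x) \<bullet> (DA 1 t *v y))"

definition inv_adj :: "real^'n^'n \<Rightarrow> real^'n^'n" where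
  "inv_adj M = matrix_inv (transpose M)"

end

theory Submission
  imports Defs
begin

lemma gronwall_zero:
  fixes e e' :: "real \<Rightarrow> real"
  assumes ab: "a \<le> b" and cont: "continuous_on {a..b} e"
    and der: "\<And>r. a < r \<Longrightarrow> r < b \<Longrightarrow> (e has_real_derivative e' r) (at r)"
    and bd: "\<And>r. a < r \<Longrightarrow> r < b \<Longrightarrow> \<bar>e' r\<bar> \<le> C * e r"
    and nn: "\<And>r. a \<le> r \<Longrightarrow> r \<le> b \<Longrightarrow> 0 \<le> e r"
    and s: "a \<le> s" "s \<le> b" and es: "e s = 0"
    and r: "a \<le> r" "r \<le> b"
  shows "e r = 0"
proof (cases "s \<le> r")
  case True
  let ?h = "\<lambda>x. e x * exp (- C * x)"
  have "?h s \<ge> ?h r"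
  proof (rule DERIV_nonpos_imp_decreasing_open[OF True])
    fix x assume x: "s < x" "x < r"
    have "(?h has_real_derivative (e' x * exp (- C * x) + e x * (exp (- C * x) * (- C)))) (at x)"
      using x s r by (auto intro!: derivative_eq_intros der)
    moreover have "e' x * exp (- C * x) + e x * (exp (- C * x) * (- C)) = (e' x - C * e x) * exp (- C * x)"
      by (simp add: algebra_simps)
    moreover have "e' x - C * e x \<le> 0" using bd[of x] x s r by auto
    ultimately show "\<exists>y. DERIV ?h x :> y \<and> y \<le> 0"
      by (metis mult_nonpos_nonneg exp_ge_zero)
  next
    show "continuous_on {s..r} ?h"
      by (intro continuous_intros continuous_on_subset[OF cont]) (use s r in auto)
  qed
  then have "e r * exp (- C * r) \<le> 0" using es by simp
  then have "e r \<le> 0" by (simp add: mult_le_0_iff)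
  then show ?thesis using nn[OF r] by simp
next
  case False
  then have rs: "r \<le> s" by simp
  let ?h = "\<lambda>x. e x * exp (C * x)"
  have "?h r \<le> ?h s"
  proof (rule DERIV_nonneg_imp_increasing_open[OF rs])
    fix x assume x: "r < x" "x < s"
    have "(?h has_real_derivative (e' x * exp (C * x) + e x * (exp (C * x) * C))) (at x)"
      using x s r by (auto intro!: derivative_eq_intros der)
    moreover have "e' x * exp (C * x) + e x * (exp (C * x) * C) = (e' x + C * e x) * exp (C * x)"
      by (simp add: algebra_simps)
    moreover have "e' x + C * e x \<ge> 0" using bd[of x] x s r by auto
    ultimately show "\<exists>y. DERIV ?h x :> y \<and> y \<ge> 0"
      by (metis mult_nonneg_nonneg exp_ge_zero)
  next
    show "continuous_on {r..s} ?h"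
      by (intro continuous_intros continuous_on_subset[OF cont]) (use s r in auto)
  qed
  then have "e r * exp (C * r) \<le> 0" using es by simp
  then have "e r \<le> 0" by (simp add: mult_le_0_iff)
  then show ?thesis using nn[OF r] by simp
qed

lemma second_order_lower:
  fixes f f1 f2 :: "real \<Rightarrow> real"
  assumes as: "a < s" "s < b"
    and d1: "\<And>x. a < x \<Longrightarrow> x < b \<Longrightarrow> (f has_real_derivative f1 x) (at x)"
    and d2: "\<And>x. a < x \<Longrightarrow> x < b \<Longrightarrow> (f1 has_real_derivative f2 x) (at x)"
    and c2: "isCont f2 s" and ep: "\<epsilon> > 0"
  shows "\<exists>\<delta>>0. \<forall>x. \<bar>x - s\<bar> < \<delta> \<longrightarrow> f s + f1 s * (x - s) + (f2 s / 2 - \<epsilon>) * (x - s)^2 \<le> f x"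
proof -
  have "\<exists>d>0. \<forall>x. x \<noteq> s \<and> norm (x - s) < d \<longrightarrow> norm (f2 x - f2 s) < 2*\<epsilon>"
    using c2 ep unfolding isCont_def LIM_eq by simp
  then obtain d0 where d0': "d0 > 0" "\<And>y. y \<noteq> s \<Longrightarrow> \<bar>y - s\<bar> < d0 \<Longrightarrow> \<bar>f2 y - f2 s\<bar> < 2*\<epsilon>"
    by auto
  have d0: "\<bar>f2 y - f2 s\<bar> < 2*\<epsilon>" if "\<bar>y - s\<bar> < d0" for y
    using d0'(2)[of y] that ep by (cases "y = s") auto
  define d where "d = min d0 (min (s - a) (b - s))"
  have dpos: "d > 0" using d0' as by (simp add: d_def)
  let ?c = "f2 s / 2 - \<epsilon>"
  let ?g = "\<lambda>x. f x - f s - f1 s * (x - s) - ?c * (x - s)^2"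
  let ?g1 = "\<lambda>x. f1 x - f1 s - 2 * ?c * (x - s)"
  have inab: "a < x \<and> x < b" if "\<bar>x - s\<bar> < d" for x
    using that by (auto simp: d_def abs_less_iff)
  have dg: "(?g has_real_derivative ?g1 x) (at x)" if "\<bar>x - s\<bar> < d" for x
    using inab[OF that] by (auto intro!: derivative_eq_intros d1 simp: power2_eq_square algebra_simps)
  have dg1: "(?g1 has_real_derivative (f2 x - 2 * ?c)) (at x)" if "\<bar>x - s\<bar> < d" for x
    using inab[OF that] by (auto intro!: derivative_eq_intros d2)
  have g1pos: "f2 x - 2 * ?c \<ge> 0" if "\<bar>x - s\<bar> < d" for x
    using d0[of x] that by (auto simp: d_def)
  have cg: "continuous_on {u..w} ?g" if "\<bar>u - s\<bar> < d" "\<bar>w - s\<bar> < d" for u w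
    using that by (intro continuous_at_imp_continuous_on ballI DERIV_isCont[OF dg]) auto
  have cg1: "continuous_on {u..w} ?g1" if "\<bar>u - s\<bar> < d" "\<bar>w - s\<bar> < d" for u w
    using that by (intro continuous_at_imp_continuous_on ballI DERIV_isCont[OF dg1]) auto
  have g1_ge: "?g1 x \<ge> 0" if "s \<le> x" "\<bar>x - s\<bar> < d" for x
  proof -
    have "?g1 s \<le> ?g1 x"
    proof (rule DERIV_nonneg_imp_increasing_open[OF that(1)])
      fix y assume "s < y" "y < x"
      then have "\<bar>y - s\<bar> < d" using that by auto
      then show "\<exists>z. DERIV ?g1 y :> z \<and> z \<ge> 0" using dg1 g1pos by blast
    qed (use that cg1 dpos in auto)
    then show ?thesis by simp
  qed
  have g1_le: "?g1 x \<le> 0" if "x \<le> s" "\<bar>x - s\<bar> < d" for x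
  proof -
    have "?g1 x \<le> ?g1 s"
    proof (rule DERIV_nonneg_imp_increasing_open[OF that(1)])
      fix y assume "x < y" "y < s"
      then have "\<bar>y - s\<bar> < d" using that by auto
      then show "\<exists>z. DERIV ?g1 y :> z \<and> z \<ge> 0" using dg1 g1pos by blast
    qed (use that cg1 dpos in auto)
    then show ?thesis by simp
  qed
  have "?g x \<ge> 0" if "\<bar>x - s\<bar> < d" for x
  proof (cases "s \<le> x")
    case True
    have "?g s \<le> ?g x"
    proof (rule DERIV_nonneg_imp_increasing_open[OF True])
      fix y assume "s < y" "y < x"
      then have "\<bar>y - s\<bar> < d" "s \<le> y" using that by auto
      then show "\<exists>z. DERIV ?g y :> z \<and> z \<ge> 0" using dg g1_ge by blast
    qed (use that cg dpos in auto)
    then show ?thesis by simp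
  next
    case False
    have "?g s \<le> ?g x"
    proof (rule DERIV_nonpos_imp_decreasing_open[of x s])
      fix y assume "x < y" "y < s"
      then have "\<bar>y - s\<bar> < d" "y \<le> s" using that by auto
      then show "\<exists>z. DERIV ?g y :> z \<and> z \<le> 0" using dg g1_le by blast
    qed (use that False cg dpos in auto)
    then show ?thesis by simp
  qed
  then show ?thesis using dpos by (intro exI[of _ d]) (smt (verit))
qed

lemma mv_transpose_inner: "(A *v x) \<bullet> (y::real^'m) = x \<bullet> (transpose A *v y)"
  for A :: "real^'n^'m"
  by (metis dot_lmul_matrix inner_commute transpose_matrix_vector)

lemma range_of_perp:
  fixes B :: "real^'n^'m" and y :: "real^'m"
  assumes "\<And>z. transpose B *v z = 0 \<Longrightarrow> y \<bullet> z = 0"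
  shows "\<exists>x. y = B *v x"
proof -
  let ?U = "range ((*v) B)"
  have sU: "subspace ?U"
    unfolding subspace_def
  proof (intro conjI ballI allI)
    show "0 \<in> ?U" by (metis matrix_vector_mult_0_right rangeI)
    fix x y assume "x \<in> ?U" "y \<in> ?U"
    then obtain p q where pq: "x = B *v p" "y = B *v q" by auto
    then have "x + y = B *v (p + q)" by (simp add: matrix_vector_right_distrib)
    then show "x + y \<in> ?U" by simp
  next
    fix c :: real and x assume "x \<in> ?U"
    then obtain p where p: "x = B *v p" by auto
    then have "c *\<^sub>R x = B *v (c *\<^sub>R p)" by (simp add: matrix_scaleR_vector_ac scaleR_matrix_vector_assoc)
    then show "c *\<^sub>R x \<in> ?U" by simp
  qed
  have "y \<in> ?U + ?U\<^sup>\<bottom>" using subspace_sum_orthogonal_comp[OF sU] by auto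
  then obtain a b where ab: "a \<in> ?U" "b \<in> ?U\<^sup>\<bottom>" "y = a + b"
    by (meson set_plus_elim)
  have "(B *v x) \<bullet> b = 0" for x using ab(2) by (auto simp: orthogonal_comp_def orthogonal_def)
  then have "(transpose B *v b) \<bullet> (transpose B *v b) = 0"
    using mv_transpose_inner[of B "transpose B *v b" b] by simp
  then have "transpose B *v b = 0" by simp
  then have yb: "y \<bullet> b = 0" using assms by simp
  have "a \<bullet> b = 0" using ab by (auto simp: orthogonal_comp_def orthogonal_def)
  with yb ab(3) have "b \<bullet> b = 0" by (simp add: inner_add_left)
  then have "b = 0" by simp
  with ab show ?thesis by auto
qed

lemma maximizer_exists:
  fixes A :: "real^'n^'n" and v :: "real^'n"
  assumes "\<And>z. A *v z = 0 \<Longrightarrow> v \<bullet> z = 0"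
  shows "\<exists>x. transpose A *v (A *v x) = v"
proof -
  have "\<exists>x. v = (transpose A ** A) *v x"
  proof (rule range_of_perp)
    fix z assume "transpose (transpose A ** A) *v z = 0"
    then have "transpose A *v (A *v z) = 0"
      by (simp add: matrix_transpose_mul matrix_vector_mul_assoc)
    then have "(A *v z) \<bullet> (A *v z) = 0" by (simp add: mv_transpose_inner)
    then show "v \<bullet> z = 0" using assms by simp
  qed
  then show ?thesis by (metis matrix_vector_mul_assoc)
qed

lemma maximizer_expand:
  fixes A :: "real^'n^'n" and v x y :: "real^'n"
  assumes "transpose A *v (A *v x) = v"
  shows "2 * (v \<bullet> y) - (A *v y) \<bullet> (A *v y) = (A *v x) \<bullet> (A *v x) - (A *v (y - x)) \<bullet> (A *v (y - x))"
    and "v \<bullet> y = (A *v y) \<bullet> (A *v x)"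
proof -
  show vy: "v \<bullet> y = (A *v y) \<bullet> (A *v x)"
    using assms by (metis inner_commute mv_transpose_inner)
  show "2 * (v \<bullet> y) - (A *v y) \<bullet> (A *v y) = (A *v x) \<bullet> (A *v x) - (A *v (y - x)) \<bullet> (A *v (y - x))"
    by (simp add: vy matrix_vector_mult_diff_distrib inner_diff_left inner_diff_right inner_commute)
qed

lemma projection_matrix:
  fixes K :: "(real^'n) set"
  assumes "subspace K"
  shows "\<exists>P::real^'n^'n. (\<forall>x. P *v x \<in> K) \<and> (\<forall>k\<in>K. P *v k = k)"
proof -
  obtain B where B: "B \<subseteq> K" "pairwise orthogonal B" "\<And>x. x \<in> B \<Longrightarrow> norm x = 1"
    "independent B" "span B = K"
    using orthonormal_basis_subspace[OF assms] by metis
  then have fB: "finite B" by (simp add: independent_imp_finite)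
  have n1: "x \<bullet> x = 1" if "x \<in> B" for x using B(3)[OF that] by (simp add: norm_eq_1)
  have *: "\<forall>x\<in>B. \<forall>y\<in>B. x \<bullet> y = (if x=y then 1 else 0)"
    using B(2) n1 by (auto simp: orthogonal_def pairwise_def)
  define p where "p = (\<lambda>v. \<Sum>b\<in>B. (v \<bullet> b) *\<^sub>R b)"
  have lp: "linear p"
    unfolding p_def by (auto simp: linear_iff inner_add_left scaleR_add_left sum.distrib scaleR_sum_right)
  have pK: "p v \<in> K" for v
    unfolding p_def by (metis (no_types, lifting) B(5) assms subspace_sum span_base span_mul subspace_span)
  have orth: "y \<bullet> (v - p v) = 0" if "y \<in> K" for v y
  proof -
    have "y \<in> range (\<lambda>u. \<Sum>v\<in>B. u v *\<^sub>R v)" using that B(5) span_finite[OF fB] by simp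
    then obtain u where u: "y = (\<Sum>b\<in>B. u b *\<^sub>R b)" by auto
    have "b \<bullet> (v - p v) = 0" if "b \<in> B" for b
      using that fB unfolding p_def
      by (simp add: * algebra_simps inner_sum_right if_distrib [of "(*)v" for v] inner_commute cong: if_cong)
    then show ?thesis by (simp add: u inner_sum_left)
  qed
  have pk: "p k = k" if "k \<in> K" for k
  proof -
    have "k - p k \<in> K" using that pK assms by (simp add: subspace_diff)
    then have "(k - p k) \<bullet> (k - p k) = 0" using orth[of "k - p k" k] by simp
    then show ?thesis by simp
  qed
  show ?thesis
    by (rule exI[of _ "matrix p"]) (simp add: matrix_works lp pK pk)
qed

lemma hvd_inner:
  assumes "(f has_vector_derivative f') (at x within s)" "(g has_vector_derivative g') (at x within s)"
  shows "((\<lambda>x. f x \<bullet> g x) has_real_derivative (f x \<bullet> g' + f' \<bullet> g x)) (at x within s)"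
  using bounded_bilinear.has_vector_derivative[OF bounded_bilinear_inner assms]
  by (simp add: has_real_derivative_iff_has_vector_derivative)

lemma bounded_linear_mv_left: "bounded_linear (\<lambda>M::real^'n^'m. M *v x)"
proof -
  have "linear (\<lambda>M::real^'n^'m. M *v x)"
    by (auto simp: linear_iff matrix_vector_mult_add_rdistrib
        scaleR_matrix_vector_assoc)
  then show ?thesis by (simp add: linear_conv_bounded_linear)
qed

lemma mv_norm_le: "norm (A *v x) \<le> (real CARD('m) * real CARD('n)) * norm A * norm x"
  for A :: "real^'n^'m"
proof -
  have "onorm ((*v) A) \<le> real CARD('m) * real CARD('n) * norm A"
    by (rule onorm_le_matrix_component) (meson component_le_norm_cart Finite_Cartesian_Product.norm_nth_le order_trans)
  moreover have "norm (A *v x) \<le> onorm ((*v) A) * norm x"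
    by (rule onorm) simp
  ultimately show ?thesis
    by (meson mult_right_mono norm_ge_zero order_trans)
qed

locale lag_setup =
  fixes t0 t1 :: real and R :: "real \<Rightarrow> real^'n^'n" and DA :: "nat \<Rightarrow> real \<Rightarrow> real^'n^'n"
  assumes t01: "t0 < t1"
    and R_cont: "continuous_on {t0..t1} R"
    and R_sym: "\<And>t. t \<in> {t0..t1} \<Longrightarrow> transpose (R t) = R t"
    and R_nonneg: "\<And>t x. t \<in> {t0..t1} \<Longrightarrow> 0 \<le> x \<bullet> (R t *v x)"
    and lag: "lagrange_tensor t0 t1 R DA"
begin

lemma der: "t \<in> {t0..t1} \<Longrightarrow> (DA k has_vector_derivative DA (Suc k) t) (at t within {t0..t1})"
  using lag unfolding lagrange_tensor_def deriv_tower_on_def by blast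

lemma derv: "t \<in> {t0..t1} \<Longrightarrow> ((\<lambda>r. DA k r *v x) has_vector_derivative DA (Suc k) t *v x) (at t within {t0..t1})"
  by (rule bounded_linear.has_vector_derivative[OF bounded_linear_mv_left der])

lemma at_int: "t0 < t \<Longrightarrow> t < t1 \<Longrightarrow> at t within {t0..t1} = at t"
  by (rule at_within_interior) simp

lemma derv_int: "t0 < t \<Longrightarrow> t < t1 \<Longrightarrow> ((\<lambda>r. DA k r *v x) has_vector_derivative DA (Suc k) t *v x) (at t)"
  using derv[of t k x] at_int[of t] by simp

lemma derv01: "t \<in> {t0..t1} \<Longrightarrow> ((\<lambda>r. DA 0 r *v x) has_vector_derivative DA 1 t *v x) (at t within {t0..t1})"
  using derv[of t 0 x] by simp
lemma derv12: "t \<in> {t0..t1} \<Longrightarrow> ((\<lambda>r. DA 1 r *v x) has_vector_derivative DA 2 t *v x) (at t within {t0..t1})"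
  using derv[of t 1 x] by (simp add: numeral_2_eq_2)
lemma derv23: "t \<in> {t0..t1} \<Longrightarrow> ((\<lambda>r. DA 2 r *v x) has_vector_derivative DA 3 t *v x) (at t within {t0..t1})"
  using derv[of t 2 x] by (simp add: numeral_3_eq_3 numeral_2_eq_2)
lemma derv01_int: "t0 < t \<Longrightarrow> t < t1 \<Longrightarrow> ((\<lambda>r. DA 0 r *v x) has_vector_derivative DA 1 t *v x) (at t)"
  using derv_int[of t 0 x] by simp
lemma derv12_int: "t0 < t \<Longrightarrow> t < t1 \<Longrightarrow> ((\<lambda>r. DA 1 r *v x) has_vector_derivative DA 2 t *v x) (at t)"
  using derv_int[of t 1 x] by (simp add: numeral_2_eq_2)
lemma derv23_int: "t0 < t \<Longrightarrow> t < t1 \<Longrightarrow> ((\<lambda>r. DA 2 r *v x) has_vector_derivative DA 3 t *v x) (at t)"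
  using derv_int[of t 2 x] by (simp add: numeral_3_eq_3 numeral_2_eq_2)

lemma contA: "continuous_on {t0..t1} (DA k)"
  unfolding continuous_on_eq_continuous_within using der has_vector_derivative_continuous by blast

lemma contAv: "continuous_on {t0..t1} (\<lambda>r. DA k r *v x)"
  unfolding continuous_on_eq_continuous_within using derv has_vector_derivative_continuous by blast

lemma jac: "t \<in> {t0..t1} \<Longrightarrow> DA 2 t *v x = - (R t *v (DA 0 t *v x))"
proof -
  assume t: "t \<in> {t0..t1}"
  then have "DA 2 t + R t ** DA 0 t = 0" using lag unfolding lagrange_tensor_def by blast
  then have "(DA 2 t + R t ** DA 0 t) *v x = 0" by simp
  then show ?thesis by (simp add: matrix_vector_mult_add_rdistrib matrix_vector_mul_assoc eq_neg_iff_add_eq_0)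
qed

lemma lagr: "t \<in> {t0..t1} \<Longrightarrow> (DA 1 t *v x) \<bullet> (DA 0 t *v y) = (DA 0 t *v x) \<bullet> (DA 1 t *v y)"
  using lag unfolding lagrange_tensor_def by blast

lemma nondeg0: "DA 0 t0 *v x = 0 \<Longrightarrow> DA 1 t0 *v x = 0 \<Longrightarrow> x = 0"
  using lag unfolding lagrange_tensor_def by blast

lemma mbound:
  fixes F :: "real \<Rightarrow> real^'n^'n"
  assumes "continuous_on {t0..t1} F"
  shows "\<exists>B\<ge>0. \<forall>t\<in>{t0..t1}. \<forall>x. norm (F t *v x) \<le> B * norm x"
proof -
  have "bounded (F ` {t0..t1})"
    by (rule compact_imp_bounded[OF compact_continuous_image[OF assms compact_Icc]])
  then obtain M where "\<forall>y\<in>F ` {t0..t1}. norm y \<le> M"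
    by (auto simp: bounded_iff)
  then have M: "\<And>t. t \<in> {t0..t1} \<Longrightarrow> norm (F t) \<le> M" by auto
  let ?B = "real CARD('n) * real CARD('n) * max M 0"
  have "norm (F t *v x) \<le> ?B * norm x" if "t \<in> {t0..t1}" for t x
  proof -
    have "norm (F t *v x) \<le> real CARD('n) * real CARD('n) * norm (F t) * norm x" by (rule mv_norm_le)
    also have "\<dots> \<le> ?B * norm x"
      using M[OF that] by (intro mult_right_mono mult_left_mono) auto
    finally show ?thesis .
  qed
  then show ?thesis by (intro exI[of _ ?B]) auto
qed

lemma nondeg:
  assumes s: "s \<in> {t0..t1}" and k0: "DA 0 s *v k = 0" and k1: "DA 1 s *v k = 0"
  shows "k = 0"
proof -
  obtain B where B: "B \<ge> 0" "\<And>t x. t \<in> {t0..t1} \<Longrightarrow> norm (R t *v x) \<le> B * norm x"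
    using mbound[OF R_cont] by blast
  define e where "e r = (DA 0 r *v k) \<bullet> (DA 0 r *v k) + (DA 1 r *v k) \<bullet> (DA 1 r *v k)" for r
  define e' where "e' r = 2 * ((DA 0 r *v k) \<bullet> (DA 1 r *v k)) + 2 * ((DA 1 r *v k) \<bullet> (DA 2 r *v k))" for r
  have "e t0 = 0"
  proof (rule gronwall_zero[of t0 t1 e e' "1 + B" s])
    show "t0 \<le> t1" using t01 by simp
    show "continuous_on {t0..t1} e" unfolding e_def
      by (intro continuous_intros contAv)
    show "(e has_real_derivative e' r) (at r)" if "t0 < r" "r < t1" for r
    proof -
      have "(e has_real_derivative
        ((DA 0 r *v k) \<bullet> (DA 1 r *v k) + (DA 1 r *v k) \<bullet> (DA 0 r *v k)) +
        ((DA 1 r *v k) \<bullet> (DA 2 r *v k) + (DA 2 r *v k) \<bullet> (DA 1 r *v k))) (at r)"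
        unfolding e_def
        by (intro DERIV_add hvd_inner derv01_int[OF that] derv12_int[OF that])
      then show ?thesis by (simp add: e'_def inner_commute)
    qed
    show "\<bar>e' r\<bar> \<le> (1 + B) * e r" if "t0 < r" "r < t1" for r
    proof -
      let ?a = "norm (DA 0 r *v k)" and ?b = "norm (DA 1 r *v k)"
      have r: "r \<in> {t0..t1}" using that by simp
      have "\<bar>(DA 0 r *v k) \<bullet> (DA 1 r *v k)\<bar> \<le> ?a * ?b" by (rule Cauchy_Schwarz_ineq2)
      moreover have "\<bar>(DA 1 r *v k) \<bullet> (DA 2 r *v k)\<bar> \<le> ?b * (B * ?a)"
      proof -
        have "\<bar>(DA 1 r *v k) \<bullet> (DA 2 r *v k)\<bar> \<le> ?b * norm (DA 2 r *v k)" by (rule Cauchy_Schwarz_ineq2)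
        also have "norm (DA 2 r *v k) = norm (R r *v (DA 0 r *v k))" by (simp add: jac[OF r])
        also have "\<dots> \<le> B * ?a" by (rule B(2)[OF r])
        finally show ?thesis by (simp add: mult_left_mono)
      qed
      ultimately have "\<bar>e' r\<bar> \<le> 2 * (?a * ?b) + 2 * (?b * (B * ?a))"
        unfolding e'_def by (smt (verit, best))
      also have "\<dots> = (1 + B) * (2 * ?a * ?b)" by (simp add: algebra_simps)
      also have "\<dots> \<le> (1 + B) * (?a^2 + ?b^2)"
        using B(1) by (intro mult_left_mono) (auto simp: sum_squares_bound)
      also have "?a^2 + ?b^2 = e r" by (simp add: e_def power2_norm_eq_inner)
      finally show ?thesis .
    qed
    show "0 \<le> e r" for r by (simp add: e_def)
    show "t0 \<le> s" "s \<le> t1" using s by auto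
    show "e s = 0" unfolding e_def using k0 k1 by simp
    show "t0 \<le> t0" "t0 \<le> t1" using t01 by auto
  qed
  then have "DA 0 t0 *v k = 0" "DA 1 t0 *v k = 0"
    by (auto simp: e_def add_nonneg_eq_0_iff)
  then show ?thesis by (rule nondeg0)
qed

lemma AK_kerT:
  assumes s: "s \<in> {t0..t1}" and k: "DA 0 s *v k = 0"
  shows "transpose (DA 0 s) *v (DA 1 s *v k) = 0"
proof -
  let ?w = "transpose (DA 0 s) *v (DA 1 s *v k)"
  have "(DA 0 s *v y) \<bullet> (DA 1 s *v k) = 0" for y
    using lagr[OF s, of k y] k by (simp add: inner_commute)
  then have "?w \<bullet> ?w = 0" by (simp add: mv_transpose_inner)
  then show ?thesis by simp
qed

lemma kerT_sub:
  assumes s: "s \<in> {t0..t1}" and u: "transpose (DA 0 s) *v u = 0"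
  shows "\<exists>k. DA 0 s *v k = 0 \<and> u = DA 1 s *v k"
proof -
  let ?A = "DA 0 s" and ?A' = "DA 1 s"
  let ?K = "{k. ?A *v k = 0}"
  have sK: "subspace ?K"
    by (auto simp: subspace_def matrix_vector_right_distrib matrix_vector_mult_scaleR)
  obtain P where P: "\<And>x. P *v x \<in> ?K" "\<And>k. k \<in> ?K \<Longrightarrow> P *v k = k"
    using projection_matrix[OF sK] by blast
  have key: "?A *v x = 0 \<and> ?A' *v (P *v x) = u'" if "?A *v x + ?A' *v (P *v x) = u'"
    and u': "transpose ?A *v u' = 0" for x u'
  proof -
    have b: "transpose ?A *v (?A' *v (P *v x)) = 0" using AK_kerT[OF s] P(1)[of x] by simp
    have "?A *v x = u' - ?A' *v (P *v x)" using that(1) by (simp add: algebra_simps)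
    then have "transpose ?A *v (?A *v x) = 0" using b u' by (simp add: matrix_vector_mult_diff_distrib)
    then have "(?A *v x) \<bullet> (?A *v x) = 0" by (simp add: mv_transpose_inner)
    then have "?A *v x = 0" by simp
    with that(1) show ?thesis by simp
  qed
  let ?T = "?A + ?A' ** P"
  have "x = 0" if "?T *v x = 0" for x
  proof -
    from that have "?A *v x + ?A' *v (P *v x) = 0"
      by (simp add: matrix_vector_mult_add_rdistrib matrix_vector_mul_assoc)
    from key[OF this] have x0: "?A *v x = 0" "?A' *v (P *v x) = 0" by auto
    have "P *v x = 0" using nondeg[OF s _ x0(2)] P(1)[of x] by simp
    moreover have "P *v x = x" using P(2) x0(1) by simp
    ultimately show ?thesis by simp
  qed
  then have "\<exists>B. B ** ?T = mat 1" by (simp add: matrix_left_invertible_ker)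
  then have "invertible ?T" by (simp add: invertible_left_inverse)
  then obtain T' where T': "?T ** T' = mat 1" by (auto simp: invertible_def)
  define x where "x = T' *v u"
  have "?T *v x = u" unfolding x_def matrix_vector_mul_assoc T' by simp
  then have "?A *v x + ?A' *v (P *v x) = u"
    by (simp add: matrix_vector_mult_add_rdistrib matrix_vector_mul_assoc)
  from key[OF this u] have "?A' *v (P *v x) = u" by simp
  then show ?thesis using P(1)[of x] by blast
qed

end

lemma hvd_quotient:
  fixes f :: "real \<Rightarrow> 'a::real_normed_vector"
  assumes "(f has_vector_derivative f') (at x within s)"
  shows "((\<lambda>y. (1 / (y - x)) *\<^sub>R (f y - f x)) \<longlongrightarrow> f') (at x within s)"
proof -
  have "((\<lambda>y. (1 / norm (y - x)) *\<^sub>R (f y - (f x + (y - x) *\<^sub>R f'))) \<longlongrightarrow> 0) (at x within s)"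
    using assms unfolding has_vector_derivative_def has_derivative_within by simp
  then have t: "((\<lambda>y. norm ((1 / norm (y - x)) *\<^sub>R (f y - (f x + (y - x) *\<^sub>R f')))) \<longlongrightarrow> 0) (at x within s)"
    by (rule tendsto_norm_zero)
  have eq: "norm ((1 / norm (y - x)) *\<^sub>R (f y - (f x + (y - x) *\<^sub>R f'))) = norm ((1 / (y - x)) *\<^sub>R (f y - f x) - f')"
    if "y \<noteq> x" for y
  proof -
    have "(1 / (y - x)) *\<^sub>R ((y - x) *\<^sub>R f') = f'" using that by simp
    then have "(1 / (y - x)) *\<^sub>R (f y - f x) - f' = (1 / (y - x)) *\<^sub>R (f y - (f x + (y - x) *\<^sub>R f'))"
      by (simp add: scaleR_diff_right scaleR_add_right)
    then show ?thesis by (simp add: real_norm_def)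
  qed
  have ev: "\<forall>\<^sub>F y in at x within s. norm ((1 / norm (y - x)) *\<^sub>R (f y - (f x + (y - x) *\<^sub>R f')))
      = norm ((1 / (y - x)) *\<^sub>R (f y - f x) - f')"
    unfolding eventually_at_filter by (rule always_eventually) (blast intro: eq)
  have "((\<lambda>y. norm ((1 / (y - x)) *\<^sub>R (f y - f x) - f')) \<longlongrightarrow> 0) (at x within s)"
    by (rule Lim_transform_eventually[OF t ev])
  then show ?thesis by (simp add: tendsto_norm_zero_iff LIM_zero_iff)
qed

lemma bad_seq:
  fixes s :: real
  assumes "\<And>\<delta>. \<delta> > 0 \<Longrightarrow> \<exists>r. P r \<and> \<bar>r - s\<bar> < \<delta>"
  shows "\<exists>X. (\<forall>n. P (X n)) \<and> X \<longlonglongrightarrow> s"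
proof -
  have "\<forall>n. \<exists>r. P r \<and> \<bar>r - s\<bar> < inverse (real (Suc n))"
    using assms by simp
  then obtain X where X: "\<And>n. P (X n) \<and> \<bar>X n - s\<bar> < inverse (real (Suc n))" by metis
  have "(\<lambda>n. X n - s) \<longlonglongrightarrow> 0"
    by (rule Lim_null_comparison[OF _ LIMSEQ_inverse_real_of_nat])
      (use X in \<open>auto intro!: always_eventually less_imp_le\<close>)
  then have "X \<longlonglongrightarrow> s" by (simp add: LIM_zero_iff)
  with X show ?thesis by blast
qed

lemma transpose_from_inner:
  fixes B :: "real^'n^'m"
  assumes "\<And>w. (B *v w) \<bullet> u = w \<bullet> c"
  shows "transpose B *v u = c"
proof -
  have "w \<bullet> (transpose B *v u - c) = 0" for w
    using assms[of w] by (simp add: mv_transpose_inner inner_diff_right)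
  from this[of "transpose B *v u - c"] show ?thesis by simp
qed

locale vsetup = lag_setup +
  fixes v :: "real^'n"
  assumes v_nz: "v \<noteq> 0"
    and v_perp: "\<And>t x. t \<in> {t0..t1} \<Longrightarrow> DA 0 t *v x = 0 \<Longrightarrow> v \<bullet> x = 0"
begin

definition maxi :: "real \<Rightarrow> real^'n \<Rightarrow> bool" where
  "maxi t x \<longleftrightarrow> transpose (DA 0 t) *v (DA 0 t *v x) = v"

definition H :: "real \<Rightarrow> real" where
  "H t = (let x = SOME x. maxi t x in (DA 0 t *v x) \<bullet> (DA 0 t *v x))"

lemma maxi_ex: "t \<in> {t0..t1} \<Longrightarrow> \<exists>x. maxi t x"
  unfolding maxi_def by (rule maximizer_exists) (use v_perp in auto)

lemma maxi_inner: "maxi t x \<Longrightarrow> v \<bullet> y = (DA 0 t *v y) \<bullet> (DA 0 t *v x)"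
  unfolding maxi_def by (rule maximizer_expand(2))

lemma H_eq: assumes "t \<in> {t0..t1}" "maxi t x" shows "H t = (DA 0 t *v x) \<bullet> (DA 0 t *v x)"
proof -
  let ?x = "SOME x. maxi t x"
  have mx: "maxi t ?x" using maxi_ex[OF assms(1)] by (rule someI_ex)
  have "(DA 0 t *v ?x) \<bullet> (DA 0 t *v ?x) = v \<bullet> ?x" using maxi_inner[OF mx, of ?x] by simp
  also have "\<dots> = (DA 0 t *v ?x) \<bullet> (DA 0 t *v x)" using maxi_inner[OF assms(2), of ?x] .
  also have "\<dots> = v \<bullet> x" using maxi_inner[OF mx, of x] by (simp add: inner_commute)
  also have "\<dots> = (DA 0 t *v x) \<bullet> (DA 0 t *v x)" using maxi_inner[OF assms(2), of x] .
  finally show ?thesis unfolding H_def by (simp add: Let_def)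
qed

lemma H_ge: assumes "t \<in> {t0..t1}" shows "2 * (v \<bullet> y) - (DA 0 t *v y) \<bullet> (DA 0 t *v y) \<le> H t"
proof -
  obtain x where x: "maxi t x" using maxi_ex[OF assms] by blast
  show ?thesis using maximizer_expand(1)[OF x[unfolded maxi_def], of y] H_eq[OF assms x] by simp
qed

lemma H_pos: assumes "t \<in> {t0..t1}" shows "H t > 0"
proof -
  obtain x where x: "maxi t x" using maxi_ex[OF assms] by blast
  have "H t \<ge> 0" using H_eq[OF assms x] by simp
  moreover have "H t \<noteq> 0"
  proof
    assume "H t = 0"
    then have "DA 0 t *v x = 0" using H_eq[OF assms x] by simp
    then have "v = 0" using x unfolding maxi_def by simp
    with v_nz show False by simp
  qed
  ultimately show ?thesis by simp
qed

lemma limit_perp: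
  assumes s: "s \<in> {t0..t1}" and r: "\<And>n. r n \<in> {t0..t1}" "\<And>n. r n \<noteq> s" "r \<longlonglongrightarrow> s"
    and u: "u \<longlonglongrightarrow> u0" and k: "DA 0 s *v k = 0"
    and perp: "\<And>n. u n \<bullet> (DA 0 (r n) *v k) = 0"
  shows "u0 \<bullet> (DA 1 s *v k) = 0"
proof -
  have q: "((\<lambda>y. (1 / (y - s)) *\<^sub>R (DA 0 y *v k - DA 0 s *v k)) \<longlongrightarrow> DA 1 s *v k) (at s within {t0..t1})"
    by (rule hvd_quotient[OF derv01[OF s]])
  have "((\<lambda>y. (1 / (y - s)) *\<^sub>R (DA 0 y *v k - DA 0 s *v k)) \<circ> r) \<longlonglongrightarrow> DA 1 s *v k"
    using q r unfolding tendsto_at_iff_sequentially by blast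
  then have q2: "(\<lambda>n. (1 / (r n - s)) *\<^sub>R (DA 0 (r n) *v k)) \<longlonglongrightarrow> DA 1 s *v k"
    using k by (simp add: comp_def)
  have "(\<lambda>n. u n \<bullet> ((1 / (r n - s)) *\<^sub>R (DA 0 (r n) *v k))) \<longlonglongrightarrow> u0 \<bullet> (DA 1 s *v k)"
    by (rule tendsto_inner[OF u q2])
  moreover have "(\<lambda>n. u n \<bullet> ((1 / (r n - s)) *\<^sub>R (DA 0 (r n) *v k))) = (\<lambda>n. 0)"
    using perp by (simp add: inner_scaleR_right)
  ultimately have "(\<lambda>n. 0::real) \<longlonglongrightarrow> u0 \<bullet> (DA 1 s *v k)" by simp
  from LIMSEQ_unique[OF tendsto_const this] show ?thesis by simp
qed

lemma lim_A_inner: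
  assumes s: "s \<in> {t0..t1}" and r: "\<And>n. r n \<in> {t0..t1}" "r \<longlonglongrightarrow> s" and u: "u \<longlonglongrightarrow> u0"
  shows "(\<lambda>n. (DA 0 (r n) *v w) \<bullet> u n) \<longlonglongrightarrow> (DA 0 s *v w) \<bullet> u0"
proof -
  have "(\<lambda>n. DA 0 (r n) *v w) \<longlonglongrightarrow> DA 0 s *v w"
    by (rule continuous_on_tendsto_compose[OF contAv r(2) s]) (use r in auto)
  then show ?thesis by (rule tendsto_inner[OF _ u])
qed

lemma perp_range:
  assumes s: "s \<in> {t0..t1}" and "\<And>k. DA 0 s *v k = 0 \<Longrightarrow> u \<bullet> (DA 1 s *v k) = 0"
  shows "\<exists>w. u = DA 0 s *v w"
proof (rule range_of_perp)
  fix z assume "transpose (DA 0 s) *v z = 0"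
  then obtain k where "DA 0 s *v k = 0" "z = DA 1 s *v k" using kerT_sub[OF s] by blast
  then show "u \<bullet> z = 0" using assms(2) by simp
qed

lemma H_cont_at: assumes s: "s \<in> {t0..t1}" shows "continuous (at s within {t0..t1}) H"
proof (rule ccontr)
  assume "\<not> ?thesis"
  then have "\<exists>\<epsilon>>0. \<forall>\<delta>>0. \<exists>r\<in>{t0..t1}. dist r s < \<delta> \<and> \<not> dist (H r) (H s) < \<epsilon>"
    unfolding continuous_within_eps_delta by (simp add: not_less) (meson not_le)
  then obtain \<epsilon> where ep: "\<epsilon> > 0" and bad: "\<And>\<delta>. \<delta> > 0 \<Longrightarrow> \<exists>r\<in>{t0..t1}. dist r s < \<delta> \<and> \<not> dist (H r) (H s) < \<epsilon>"
    by blast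
  have "\<exists>X. (\<forall>n. X n \<in> {t0..t1} \<and> \<epsilon> \<le> \<bar>H (X n) - H s\<bar>) \<and> X \<longlonglongrightarrow> s"
  proof (rule bad_seq)
    fix \<delta> :: real assume "\<delta> > 0"
    then obtain r where "r \<in> {t0..t1}" "dist r s < \<delta>" "\<not> dist (H r) (H s) < \<epsilon>" using bad by blast
    then show "\<exists>r. (r \<in> {t0..t1} \<and> \<epsilon> \<le> \<bar>H r - H s\<bar>) \<and> \<bar>r - s\<bar> < \<delta>" by (auto simp: dist_real_def)
  qed
  then obtain r where r: "\<And>n. r n \<in> {t0..t1} \<and> \<epsilon> \<le> \<bar>H (r n) - H s\<bar>" and rs: "r \<longlonglongrightarrow> s"
    by blast
  have rI: "r n \<in> {t0..t1}" for n using r by blast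
  have rne: "r n \<noteq> s" for n using r[of n] ep by auto
  have "\<forall>n. \<exists>x. maxi (r n) x" using maxi_ex rI by blast
  then obtain x where x: "\<And>n. maxi (r n) (x n)" by metis
  define Y where "Y n = DA 0 (r n) *v x n" for n
  have HY: "H (r n) = Y n \<bullet> Y n" for n using H_eq[OF rI x] by (simp add: Y_def)
  have YT: "(DA 0 (r n) *v w) \<bullet> Y n = v \<bullet> w" for n w using maxi_inner[OF x[of n], of w] by (simp add: Y_def)
  define \<nu> where "\<nu> n = max 1 (norm (Y n))" for n
  have \<nu>1: "\<nu> n \<ge> 1" for n by (simp add: \<nu>_def)
  define z where "z n = ((1 / \<nu> n) *\<^sub>R Y n, 1 / \<nu> n)" for n
  have "norm (z n) \<le> 2" for n
  proof -
    have yn: "norm (Y n) \<le> \<nu> n" by (simp add: \<nu>_def)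
    have "norm ((1 / \<nu> n) *\<^sub>R Y n) = norm (Y n) / \<nu> n" using \<nu>1[of n] by simp
    also have "\<dots> \<le> 1" using yn \<nu>1[of n] by (simp add: divide_le_eq)
    finally have a: "norm ((1 / \<nu> n) *\<^sub>R Y n) \<le> 1" .
    have b: "norm (1 / \<nu> n) \<le> 1" using \<nu>1[of n] by simp
    have "norm (z n) \<le> norm ((1 / \<nu> n) *\<^sub>R Y n) + norm (1 / \<nu> n)"
      unfolding z_def by (rule norm_Pair_le)
    then show ?thesis using a b by simp
  qed
  then have "bounded (range z)" unfolding bounded_iff by (intro exI[of _ 2]) blast
  then obtain l \<sigma> where \<sigma>: "strict_mono \<sigma>" and zl: "(z \<circ> \<sigma>) \<longlonglongrightarrow> l"
    using bounded_imp_convergent_subsequence by blast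
  obtain u \<mu> where l: "l = (u, \<mu>)" by (cases l)
  define uu where "uu n = (1 / \<nu> (\<sigma> n)) *\<^sub>R Y (\<sigma> n)" for n
  define rr where "rr n = r (\<sigma> n)" for n
  have uu: "uu \<longlonglongrightarrow> u" using tendsto_fst[OF zl] unfolding l z_def uu_def by (simp add: comp_def)
  have mu: "(\<lambda>n. 1 / \<nu> (\<sigma> n)) \<longlonglongrightarrow> \<mu>" using tendsto_snd[OF zl] unfolding l z_def by (simp add: comp_def)
  have rr: "rr \<longlonglongrightarrow> s" using LIMSEQ_subseq_LIMSEQ[OF rs \<sigma>] unfolding rr_def[abs_def] comp_def .
  have rrI: "rr n \<in> {t0..t1}" for n using rI[of "\<sigma> n"] by (simp only: rr_def)
  have rrne: "rr n \<noteq> s" for n by (simp add: rr_def rne)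
  have uuperp: "uu n \<bullet> (DA 0 (rr n) *v k) = 0" if "DA 0 s *v k = 0" for n k
    using YT[of "\<sigma> n" k] v_perp[OF s that] by (simp add: uu_def rr_def inner_commute)
  have uperp: "u \<bullet> (DA 1 s *v k) = 0" if "DA 0 s *v k = 0" for k
    by (rule limit_perp[OF s rrI rrne rr uu that uuperp[OF that]])
  obtain w0 where w0: "u = DA 0 s *v w0" using perp_range[OF s uperp] by blast
  have uT: "transpose (DA 0 s) *v u = \<mu> *\<^sub>R v"
  proof (rule transpose_from_inner)
    fix w
    have l1: "(\<lambda>n. (DA 0 (rr n) *v w) \<bullet> uu n) \<longlonglongrightarrow> (DA 0 s *v w) \<bullet> u"
      by (rule lim_A_inner[OF s rrI rr uu])
    have "(\<lambda>n. (DA 0 (rr n) *v w) \<bullet> uu n) = (\<lambda>n. (1 / \<nu> (\<sigma> n)) * (v \<bullet> w))"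
      using YT by (simp add: uu_def rr_def inner_scaleR_right)
    moreover have "(\<lambda>n. (1 / \<nu> (\<sigma> n)) * (v \<bullet> w)) \<longlonglongrightarrow> \<mu> * (v \<bullet> w)"
      by (intro tendsto_intros mu)
    ultimately have "(DA 0 s *v w) \<bullet> u = \<mu> * (v \<bullet> w)" using l1 LIMSEQ_unique by metis
    then show "(DA 0 s *v w) \<bullet> u = w \<bullet> (\<mu> *\<^sub>R v)" by (simp add: inner_commute)
  qed
  have mu0: "\<mu> \<ge> 0"
  proof (rule LIMSEQ_le_const[OF mu])
    show "\<exists>N. \<forall>n\<ge>N. 0 \<le> 1 / \<nu> (\<sigma> n)"
      using \<nu>1 by (intro exI[of _ 0] allI impI) (smt (verit) divide_nonneg_nonneg)
  qed
  show False
  proof (cases "\<mu> = 0")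
    case True
    have "(DA 0 s *v w0) \<bullet> (DA 0 s *v w0) = 0"
      using uT True w0 mv_transpose_inner[of "DA 0 s" w0 u] by simp
    then have u0: "u = 0" using w0 by simp
    have "\<forall>\<^sub>F n in sequentially. 1 / \<nu> (\<sigma> n) < 1"
      using mu True by (auto simp: order_tendsto_iff)
    then have "\<forall>\<^sub>F n in sequentially. 1 = norm (uu n)"
    proof (rule eventually_mono)
      fix n assume "1 / \<nu> (\<sigma> n) < 1"
      then have "\<nu> (\<sigma> n) > 1" using \<nu>1[of "\<sigma> n"] by (simp add: divide_less_eq)
      then have "\<nu> (\<sigma> n) = norm (Y (\<sigma> n))" by (simp add: \<nu>_def max_def split: if_splits)
      moreover have "Y (\<sigma> n) \<noteq> 0" using \<open>\<nu> (\<sigma> n) > 1\<close> calculation by auto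
      ultimately show "1 = norm (uu n)" using \<open>\<nu> (\<sigma> n) > 1\<close> by (simp add: uu_def)
    qed
    then have "(\<lambda>n. norm (uu n)) \<longlonglongrightarrow> 1" by (rule Lim_transform_eventually[OF tendsto_const])
    moreover have "(\<lambda>n. norm (uu n)) \<longlonglongrightarrow> 0" using tendsto_norm[OF uu] u0 by simp
    ultimately have "(1::real) = 0" by (rule LIMSEQ_unique)
    then show False by simp
  next
    case False
    then have mpos: "\<mu> > 0" using mu0 by simp
    define y where "y = (1 / \<mu>) *\<^sub>R u"
    have "(\<lambda>n. (1 / (1 / \<nu> (\<sigma> n))) *\<^sub>R uu n) \<longlonglongrightarrow> (1 / \<mu>) *\<^sub>R u"
      using mpos by (intro tendsto_intros mu uu) auto
    moreover have "(\<lambda>n. (1 / (1 / \<nu> (\<sigma> n))) *\<^sub>R uu n) = (\<lambda>n. Y (\<sigma> n))"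
    proof
      fix n
      have "\<nu> (\<sigma> n) \<noteq> 0" using \<nu>1[of "\<sigma> n"] by simp
      then show "(1 / (1 / \<nu> (\<sigma> n))) *\<^sub>R uu n = Y (\<sigma> n)" by (simp add: uu_def)
    qed
    ultimately have Ylim: "(\<lambda>n. Y (\<sigma> n)) \<longlonglongrightarrow> y" by (simp add: y_def)
    have "maxi s ((1 / \<mu>) *\<^sub>R w0)"
      unfolding maxi_def using uT mpos w0 by (simp add: matrix_vector_mult_scaleR)
    then have Hs: "H s = y \<bullet> y" using H_eq[OF s] w0 by (simp add: y_def matrix_vector_mult_scaleR)
    have "(\<lambda>n. H (rr n)) \<longlonglongrightarrow> H s"
      unfolding Hs rr_def HY by (intro tendsto_intros Ylim)
    then have "\<forall>\<^sub>F n in sequentially. \<bar>H (rr n) - H s\<bar> < \<epsilon>"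
      using ep by (auto simp: tendsto_iff dist_real_def)
    then obtain n where "\<bar>H (rr n) - H s\<bar> < \<epsilon>" by (meson eventually_sequentially order_refl)
    with r[of "\<sigma> n"] show False by (simp add: rr_def)
  qed
qed

lemma H_cont: "continuous_on {t0..t1} H"
  unfolding continuous_on_eq_continuous_within using H_cont_at by blast

lemma noninv_ker:
  fixes A :: "real^'n^'n"
  assumes "\<not> invertible A"
  shows "\<exists>u. norm u = 1 \<and> transpose A *v u = 0"
proof -
  have "\<not> invertible (transpose A)" using assms transpose_invertible[of "transpose A"] by auto
  then have "\<not> (\<forall>x. transpose A *v x = 0 \<longrightarrow> x = 0)"
    using matrix_left_invertible_ker invertible_left_inverse by metis
  then obtain x where x: "x \<noteq> 0" "transpose A *v x = 0" by blast
  then show ?thesis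
    by (intro exI[of _ "(1 / norm x) *\<^sub>R x"]) (simp add: matrix_vector_mult_scaleR)
qed

lemma isolated:
  assumes s: "s \<in> {t0..t1}"
  shows "\<exists>\<delta>>0. \<forall>r\<in>{t0..t1}. r \<noteq> s \<and> \<bar>r - s\<bar> < \<delta> \<longrightarrow> invertible (DA 0 r)"
proof (rule ccontr)
  assume "\<not> ?thesis"
  then have "\<And>\<delta>. \<delta> > 0 \<Longrightarrow> \<exists>r. (r \<in> {t0..t1} \<and> r \<noteq> s \<and> \<not> invertible (DA 0 r)) \<and> \<bar>r - s\<bar> < \<delta>"
    by blast
  from bad_seq[of "\<lambda>r. r \<in> {t0..t1} \<and> r \<noteq> s \<and> \<not> invertible (DA 0 r)", OF this]
  obtain r where r: "\<And>n. r n \<in> {t0..t1}" "\<And>n. r n \<noteq> s" "\<And>n. \<not> invertible (DA 0 (r n))" and rs: "r \<longlonglongrightarrow> s"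
    by blast
  have "\<forall>n. \<exists>u. norm u = 1 \<and> transpose (DA 0 (r n)) *v u = 0" using noninv_ker r(3) by blast
  then obtain u where u: "\<And>n. norm (u n) = 1" "\<And>n. transpose (DA 0 (r n)) *v u n = 0" by metis
  have "bounded (range u)" unfolding bounded_iff by (intro exI[of _ 1]) (use u in simp)
  then obtain u0 \<sigma> where \<sigma>: "strict_mono \<sigma>" and ul: "(u \<circ> \<sigma>) \<longlonglongrightarrow> u0"
    using bounded_imp_convergent_subsequence by blast
  define rr where "rr n = r (\<sigma> n)" for n
  have rr: "rr \<longlonglongrightarrow> s" using LIMSEQ_subseq_LIMSEQ[OF rs \<sigma>] unfolding rr_def[abs_def] comp_def .
  have rrI: "rr n \<in> {t0..t1}" for n using r(1)[of "\<sigma> n"] by (simp only: rr_def)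
  have rrne: "rr n \<noteq> s" for n by (simp add: rr_def r)
  have ul': "(\<lambda>n. u (\<sigma> n)) \<longlonglongrightarrow> u0" using ul by (simp add: comp_def)
  have perp: "u (\<sigma> n) \<bullet> (DA 0 (rr n) *v k) = 0" for n k
    using mv_transpose_inner[of "DA 0 (rr n)" k "u (\<sigma> n)"] u(2)[of "\<sigma> n"] by (simp add: rr_def inner_commute)
  have u0perp: "u0 \<bullet> (DA 1 s *v k) = 0" if "DA 0 s *v k = 0" for k
    by (rule limit_perp[OF s rrI rrne rr ul' that perp])
  have u0T: "transpose (DA 0 s) *v u0 = 0"
  proof (rule transpose_from_inner)
    fix w
    have "(\<lambda>n. (DA 0 (rr n) *v w) \<bullet> u (\<sigma> n)) \<longlonglongrightarrow> (DA 0 s *v w) \<bullet> u0"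
      by (rule lim_A_inner[OF s rrI rr ul'])
    moreover have "(\<lambda>n. (DA 0 (rr n) *v w) \<bullet> u (\<sigma> n)) = (\<lambda>n. 0)"
      using perp by (simp add: inner_commute)
    ultimately have "(\<lambda>n. 0::real) \<longlonglongrightarrow> (DA 0 s *v w) \<bullet> u0" by simp
    from LIMSEQ_unique[OF tendsto_const this] show "(DA 0 s *v w) \<bullet> u0 = w \<bullet> 0" by simp
  qed
  obtain k where k: "DA 0 s *v k = 0" "u0 = DA 1 s *v k"
    using kerT_sub[OF s u0T] by blast
  have "u0 \<bullet> u0 = 0" using u0perp[OF k(1)] k(2) by simp
  then have "u0 = 0" by simp
  moreover have "norm u0 = 1"
  proof -
    have "(\<lambda>n. norm (u (\<sigma> n))) \<longlonglongrightarrow> norm u0" by (rule tendsto_norm[OF ul'])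
    then have "(\<lambda>n. 1::real) \<longlonglongrightarrow> norm u0" using u(1) by simp
    from LIMSEQ_unique[OF tendsto_const this] show ?thesis by simp
  qed
  ultimately show False by simp
qed

end

definition LS :: "real \<Rightarrow> real \<Rightarrow> (real \<Rightarrow> real) \<Rightarrow> bool" where
  "LS a b H \<longleftrightarrow> (\<forall>s. a < s \<and> s < b \<longrightarrow> (\<exists>cc. \<forall>\<epsilon>>0. \<exists>\<delta>>0. \<forall>r. a \<le> r \<and> r \<le> b \<and> \<bar>r - s\<bar> < \<delta>
      \<longrightarrow> H s + cc * (r - s) - \<epsilon> * (r - s)^2 \<le> H r))"

lemma chord:
  fixes H :: "real \<Rightarrow> real"
  assumes cont: "continuous_on {a..b} H" and ls: "LS a b H"
    and pm: "a \<le> p" "p < m" "m < q" "q \<le> b"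
  shows "H m \<le> H p + (H q - H p) * (m - p) / (q - p)"
proof (rule ccontr)
  assume neg: "\<not> ?thesis"
  define sl where "sl = (H q - H p) / (q - p)"
  define L where "L r = H p + sl * (r - p)" for r
  have Lm: "L m = H p + (H q - H p) * (m - p) / (q - p)" by (simp add: L_def sl_def)
  define d0 where "d0 = H m - L m"
  have d0: "d0 > 0" using neg Lm by (simp add: d0_def)
  define \<eta> where "\<eta> = d0 / (2 * ((m - p) * (q - m)))"
  have mpq: "(m - p) * (q - m) > 0" using pm by simp
  have eta: "\<eta> > 0" using d0 mpq by (simp add: \<eta>_def)
  define G where "G r = H r - L r + \<eta> * ((r - p) * (r - q))" for r
  have Gp: "G p = 0" by (simp add: G_def L_def)
  have Gq: "G q = 0" using pm by (simp add: G_def L_def sl_def)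
  have "\<eta> * ((m - p) * (m - q)) = - d0 / 2"
    using mpq by (simp add: \<eta>_def field_simps)
  then have Gm: "G m = d0 / 2" by (simp add: G_def d0_def)
  have contG: "continuous_on {p..q} G"
    unfolding G_def L_def using pm
    by (intro continuous_intros continuous_on_subset[OF cont]) auto
  obtain c where c: "c \<in> {p..q}" and cmax: "\<And>y. y \<in> {p..q} \<Longrightarrow> G y \<le> G c"
    using continuous_attains_sup[OF compact_Icc _ contG] pm by (metis atLeastAtMost_iff empty_iff less_eq_real_def order.strict_trans)
  have "G c \<ge> G m" using cmax pm by simp
  then have Gc: "G c > 0" using Gm d0 by simp
  have pc: "p < c" "c < q" using c Gc Gp Gq by (auto simp: less_le)
  then have "a < c" "c < b" using pm by auto
  then obtain cc where "\<forall>\<epsilon>>0. \<exists>\<delta>>0. \<forall>r. a \<le> r \<and> r \<le> b \<and> \<bar>r - c\<bar> < \<delta> \<longrightarrow> H c + cc * (r - c) - \<epsilon> * (r - c)^2 \<le> H r"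
    using ls unfolding LS_def by blast
  then obtain \<delta> where \<delta>: "\<delta> > 0" and hl: "\<And>r. a \<le> r \<Longrightarrow> r \<le> b \<Longrightarrow> \<bar>r - c\<bar> < \<delta> \<Longrightarrow> H c + cc * (r - c) - (\<eta>/2) * (r - c)^2 \<le> H r"
    using eta by (metis half_gt_zero)
  define h where "h = min (\<delta>/2) (min ((c - p)/2) ((q - c)/2))"
  have h: "h > 0" "h < \<delta>" "p < c - h" "c + h < q" using \<delta> pc by (auto simp: h_def min_def field_simps)
  have H1: "H c + cc * h - (\<eta>/2) * h^2 \<le> H (c + h)"
    using hl[of "c + h"] h pm by simp
  have H2: "H c - cc * h - (\<eta>/2) * h^2 \<le> H (c - h)"
    using hl[of "c - h"] h pm by (simp add: power2_eq_square)
  have G1: "G (c + h) \<le> G c" using cmax h by simp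
  have G2: "G (c - h) \<le> G c" using cmax h by simp
  have Lsum: "L (c + h) + L (c - h) = 2 * L c" by (simp add: L_def algebra_simps)
  have Qsum: "(c + h - p) * (c + h - q) + (c - h - p) * (c - h - q) = 2 * ((c - p) * (c - q)) + 2 * h^2"
    by (simp add: algebra_simps power2_eq_square)
  have "G (c + h) + G (c - h) - 2 * G c = (H (c + h) + H (c - h) - 2 * H c) + \<eta> * (2 * h^2)"
    unfolding G_def using Lsum Qsum by (simp add: algebra_simps)
  also have "\<dots> \<ge> - \<eta> * h^2 + \<eta> * (2 * h^2)" using H1 H2 by simp
  finally have "G (c + h) + G (c - h) - 2 * G c \<ge> \<eta> * h^2" by simp
  moreover have "\<eta> * h^2 > 0" using eta h by simp
  ultimately show False using G1 G2 by simp
qed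

lemma ls_const:
  fixes H :: "real \<Rightarrow> real"
  assumes ab: "a < b" and cont: "continuous_on {a..b} H" and ls: "LS a b H"
    and da: "(H has_real_derivative 0) (at a within {a..b})"
    and db: "(H has_real_derivative 0) (at b within {a..b})"
  shows "\<And>r. r \<in> {a..b} \<Longrightarrow> H r = H a"
proof -
  have geA: "H r \<ge> H a" if r: "a < r" "r \<le> b" for r
  proof -
    have main: "H r - H a \<ge> - (\<eta> * (r - a))" if eta: "\<eta> > 0" for \<eta>
    proof -
      have "((\<lambda>y. (H y - H a) / (y - a)) \<longlongrightarrow> 0) (at a within {a..b})"
        using da by (simp add: has_field_derivative_iff)
      then have "\<forall>\<^sub>F y in at a within {a..b}. dist ((H y - H a) / (y - a)) 0 < \<eta>"
        using eta by (simp add: tendsto_iff)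
      then obtain d where d: "d > 0" "\<And>y. y \<in> {a..b} \<Longrightarrow> y \<noteq> a \<Longrightarrow> dist y a < d \<Longrightarrow> \<bar>(H y - H a) / (y - a)\<bar> < \<eta>"
        unfolding eventually_at by auto
      define y where "y = a + min (d/2) ((r - a)/2)"
      have y: "a < y" "y < r" "dist y a < d" unfolding y_def dist_real_def using d r by (auto simp: min_def field_simps)
      define t where "t = (y - a) / (r - a)"
      have t: "t > 0" "y - a = t * (r - a)" using y r by (auto simp: t_def)
      have "\<bar>(H y - H a) / (y - a)\<bar> < \<eta>" using d(2)[of y] y r by simp
      then have "\<bar>H y - H a\<bar> < \<eta> * (y - a)" using y by (simp add: abs_divide pos_divide_less_eq)
      then have c1: "H y - H a > - (\<eta> * (r - a) * t)" using t by (simp add: mult_ac)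
      have "H y \<le> H a + (H r - H a) * (y - a) / (r - a)"
        by (rule chord[OF cont ls]) (use y r in auto)
      then have c2: "H y \<le> H a + (H r - H a) * t" by (simp add: t_def)
      from c1 c2 have "(- (\<eta> * (r - a))) * t < (H r - H a) * t" by simp
      then have "- (\<eta> * (r - a)) < H r - H a" by (rule mult_less_cancel_right_pos[OF t(1), THEN iffD1])
      then show ?thesis by simp
    qed
    show ?thesis
    proof (rule ccontr)
      assume "\<not> H r \<ge> H a"
      define \<eta> where "\<eta> = (H a - H r) / (2 * (r - a))"
      have "\<eta> > 0" using \<open>\<not> H r \<ge> H a\<close> r by (simp add: \<eta>_def)
      moreover have "\<eta> * (r - a) = (H a - H r) / 2" using r by (simp add: \<eta>_def field_simps)
      ultimately show False using main[of \<eta>] \<open>\<not> H r \<ge> H a\<close> by simp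
    qed
  qed
  have geB: "H r \<ge> H b" if r: "a \<le> r" "r < b" for r
  proof -
    have main: "H r - H b \<ge> - (\<eta> * (b - r))" if eta: "\<eta> > 0" for \<eta>
    proof -
      have "((\<lambda>y. (H y - H b) / (y - b)) \<longlongrightarrow> 0) (at b within {a..b})"
        using db by (simp add: has_field_derivative_iff)
      then have "\<forall>\<^sub>F y in at b within {a..b}. dist ((H y - H b) / (y - b)) 0 < \<eta>"
        using eta by (simp add: tendsto_iff)
      then obtain d where d: "d > 0" "\<And>y. y \<in> {a..b} \<Longrightarrow> y \<noteq> b \<Longrightarrow> dist y b < d \<Longrightarrow> \<bar>(H y - H b) / (y - b)\<bar> < \<eta>"
        unfolding eventually_at by auto
      define y where "y = b - min (d/2) ((b - r)/2)"
      have y: "r < y" "y < b" "dist y b < d" unfolding y_def dist_real_def using d r by (auto simp: min_def field_simps)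
      define t where "t = (b - y) / (b - r)"
      have t: "t > 0" "b - y = t * (b - r)" using y r by (auto simp: t_def)
      have "\<bar>(H y - H b) / (y - b)\<bar> < \<eta>" using d(2)[of y] y r by simp
      then have "\<bar>H y - H b\<bar> / (b - y) < \<eta>" using y by (simp add: abs_divide abs_minus_commute)
      then have "\<bar>H y - H b\<bar> < \<eta> * (b - y)" using y by (simp add: pos_divide_less_eq)
      then have c1: "H y - H b > - (\<eta> * (b - r) * t)" using t by (simp add: mult_ac)
      have "H y \<le> H r + (H b - H r) * (y - r) / (b - r)"
        by (rule chord[OF cont ls]) (use y r in auto)
      moreover have "(y - r) / (b - r) = 1 - t" using r by (simp add: t_def field_simps)
      then have "(H b - H r) * (y - r) / (b - r) = (H b - H r) * (1 - t)" by (metis times_divide_eq_right)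
      ultimately have "H y \<le> H r + (H b - H r) * (1 - t)" by simp
      also have "\<dots> = H b - (H b - H r) * t" by (simp add: algebra_simps)
      finally have c2: "H y \<le> H b - (H b - H r) * t" .
      from c1 c2 have "(H b - H r) * t < (\<eta> * (b - r)) * t" by simp
      then have "H b - H r < \<eta> * (b - r)" by (rule mult_less_cancel_right_pos[OF t(1), THEN iffD1])
      then show ?thesis by simp
    qed
    show ?thesis
    proof (rule ccontr)
      assume "\<not> H r \<ge> H b"
      define \<eta> where "\<eta> = (H b - H r) / (2 * (b - r))"
      have "\<eta> > 0" using \<open>\<not> H r \<ge> H b\<close> r by (simp add: \<eta>_def)
      moreover have "\<eta> * (b - r) = (H b - H r) / 2" using r by (simp add: \<eta>_def field_simps)
      ultimately show False using main[of \<eta>] \<open>\<not> H r \<ge> H b\<close> by simp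
    qed
  qed
  have eq: "H b = H a" using geA[of b] geB[of a] ab by simp
  fix r assume r: "r \<in> {a..b}"
  show "H r = H a"
  proof (cases "r = a \<or> r = b")
    case True then show ?thesis using eq by auto
  next
    case False
    then have r': "a < r" "r < b" using r by auto
    have "H r \<le> H a + (H b - H a) * (r - a) / (b - a)"
      by (rule chord[OF cont ls]) (use r' in auto)
    then have "H r \<le> H a" using eq by simp
    moreover have "H r \<ge> H a" using geA r' by simp
    ultimately show ?thesis by simp
  qed
qed

lemma subspace_range_mv: "subspace (range ((*v) (B::real^'n^'m)))"
  unfolding subspace_def
proof (intro conjI ballI allI)
  show "0 \<in> range ((*v) B)" by (metis matrix_vector_mult_0_right rangeI)
  fix x y assume "x \<in> range ((*v) B)" "y \<in> range ((*v) B)"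
  then obtain p q where pq: "x = B *v p" "y = B *v q" by auto
  then have "x + y = B *v (p + q)" by (simp add: matrix_vector_right_distrib)
  then show "x + y \<in> range ((*v) B)" by simp
next
  fix c :: real and x assume "x \<in> range ((*v) B)"
  then obtain p where p: "x = B *v p" by auto
  then have "c *\<^sub>R x = B *v (c *\<^sub>R p)" by (simp add: matrix_vector_mult_scaleR)
  then show "c *\<^sub>R x \<in> range ((*v) B)" by simp
qed

lemma perp_range_kerT:
  fixes B :: "real^'n^'m"
  assumes "b \<in> (range ((*v) B))\<^sup>\<bottom>"
  shows "transpose B *v b = 0"
proof -
  have "(B *v x) \<bullet> b = 0" for x using assms by (auto simp: orthogonal_comp_def orthogonal_def)
  then have "(transpose B *v b) \<bullet> (transpose B *v b) = 0"
    using mv_transpose_inner[of B "transpose B *v b" b] by simp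
  then show ?thesis by simp
qed

lemma mv_minus: "A *v (- x) = - (A *v x)" for A :: "real^'n^'m"
  by (metis matrix_vector_mult_scaleR scaleR_minus1_left)

lemma psd_zero:
  fixes Q :: "real^'n^'n"
  assumes sym: "transpose Q = Q" and nn: "\<And>x. 0 \<le> x \<bullet> (Q *v x)" and y: "y \<bullet> (Q *v y) = 0"
  shows "Q *v y = 0"
proof -
  have "w \<bullet> (Q *v y) = 0" for w
  proof (rule ccontr)
    assume b0: "w \<bullet> (Q *v y) \<noteq> 0"
    define b where "b = w \<bullet> (Q *v y)"
    define a where "a = w \<bullet> (Q *v w)"
    have a0: "a \<ge> 0" using nn by (simp add: a_def)
    define \<epsilon> where "\<epsilon> = 1 / (a + 1)"
    have ep: "\<epsilon> > 0" "\<epsilon> * a < 2" using a0 by (auto simp: \<epsilon>_def field_simps)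
    define t where "t = - \<epsilon> * b"
    have sy: "y \<bullet> (Q *v w) = b"
      using mv_transpose_inner[of Q y w] sym by (simp add: b_def inner_commute)
    have "(y + t *\<^sub>R w) \<bullet> (Q *v (y + t *\<^sub>R w)) = y \<bullet> (Q *v y) + 2 * t * b + t^2 * a"
      by (simp add: matrix_vector_right_distrib matrix_vector_mult_scaleR inner_add_left inner_add_right
          sy a_def b_def power2_eq_square algebra_simps inner_commute)
    also have "\<dots> = \<epsilon> * b^2 * (\<epsilon> * a - 2)" using y by (simp add: t_def power2_eq_square algebra_simps)
    also have "\<dots> < 0" using ep b0 by (intro mult_pos_neg) (auto simp: b_def)
    finally show False using nn[of "y + t *\<^sub>R w"] by simp
  qed
  from this[of "Q *v y"] show ?thesis by simp
qed

context vsetup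
begin

lemma adjust:
  assumes s: "s \<in> {t0..t1}"
  shows "\<exists>x z0. maxi s x \<and> DA 1 s *v x = DA 0 s *v z0"
proof -
  obtain x1 where x1: "maxi s x1" using maxi_ex[OF s] by blast
  let ?U = "range ((*v) (DA 0 s))"
  have "DA 1 s *v x1 \<in> ?U + ?U\<^sup>\<bottom>" using subspace_sum_orthogonal_comp[OF subspace_range_mv] by auto
  then obtain a b where ab: "a \<in> ?U" "b \<in> ?U\<^sup>\<bottom>" "DA 1 s *v x1 = a + b"
    by (meson set_plus_elim)
  obtain k where k: "DA 0 s *v k = 0" "b = DA 1 s *v k"
    using kerT_sub[OF s perp_range_kerT[OF ab(2)]] by blast
  obtain z0 where z0: "a = DA 0 s *v z0" using ab(1) by auto
  have "maxi s (x1 - k)" using x1 k by (simp add: maxi_def matrix_vector_mult_diff_distrib)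
  moreover have "DA 1 s *v (x1 - k) = DA 0 s *v z0"
    using ab(3) k z0 by (simp add: matrix_vector_mult_diff_distrib)
  ultimately show ?thesis by blast
qed

definition "JJ s x z r = DA 0 r *v x + (r - s) *\<^sub>R (DA 0 r *v z)"
definition "JJ1 s x z r = DA 1 r *v x + (r - s) *\<^sub>R (DA 1 r *v z) + DA 0 r *v z"
definition "JJ2 s x z r = DA 2 r *v x + (r - s) *\<^sub>R (DA 2 r *v z) + 2 *\<^sub>R (DA 1 r *v z)"
definition "phi s x z r = 2 * (v \<bullet> x) + 2 * (r - s) * (v \<bullet> z) - JJ s x z r \<bullet> JJ s x z r"
definition "phi1 s x z r = 2 * (v \<bullet> z) - 2 * (JJ s x z r \<bullet> JJ1 s x z r)"
definition "phi2 s x z r = - 2 * (JJ1 s x z r \<bullet> JJ1 s x z r) - 2 * (JJ s x z r \<bullet> JJ2 s x z r)"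

lemma JJ_der:
  assumes r: "t0 < r" "r < t1"
  shows "(JJ s x z has_vector_derivative JJ1 s x z r) (at r)"
proof -
  have d2: "((\<lambda>r. (r - s) *\<^sub>R (DA 0 r *v z)) has_vector_derivative
      ((r - s) *\<^sub>R (DA 1 r *v z) + 1 *\<^sub>R (DA 0 r *v z))) (at r)"
    by (rule has_vector_derivative_scaleR[OF _ derv01_int[OF r]]) (auto intro!: derivative_eq_intros)
  have "((\<lambda>r. DA 0 r *v x + (r - s) *\<^sub>R (DA 0 r *v z)) has_vector_derivative
      (DA 1 r *v x + ((r - s) *\<^sub>R (DA 1 r *v z) + 1 *\<^sub>R (DA 0 r *v z)))) (at r)"
    by (rule has_vector_derivative_add[OF derv01_int[OF r] d2])
  then show ?thesis unfolding JJ_def[abs_def] JJ1_def by (simp add: add.assoc)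
qed

lemma JJ1_der:
  assumes r: "t0 < r" "r < t1"
  shows "(JJ1 s x z has_vector_derivative JJ2 s x z r) (at r)"
proof -
  have d2: "((\<lambda>r. (r - s) *\<^sub>R (DA 1 r *v z)) has_vector_derivative
      ((r - s) *\<^sub>R (DA 2 r *v z) + 1 *\<^sub>R (DA 1 r *v z))) (at r)"
    by (rule has_vector_derivative_scaleR[OF _ derv12_int[OF r]]) (auto intro!: derivative_eq_intros)
  have "((\<lambda>r. DA 1 r *v x + (r - s) *\<^sub>R (DA 1 r *v z) + DA 0 r *v z) has_vector_derivative
      (DA 2 r *v x + ((r - s) *\<^sub>R (DA 2 r *v z) + 1 *\<^sub>R (DA 1 r *v z)) + DA 1 r *v z)) (at r)"
    by (rule has_vector_derivative_add[OF has_vector_derivative_add[OF derv12_int[OF r] d2] derv01_int[OF r]])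
  moreover have "DA 2 r *v x + ((r - s) *\<^sub>R (DA 2 r *v z) + 1 *\<^sub>R (DA 1 r *v z)) + DA 1 r *v z = JJ2 s x z r"
    by (simp add: JJ2_def algebra_simps scaleR_2)
  ultimately show ?thesis unfolding JJ1_def[abs_def] by simp
qed

lemma JJ_cont: "t0 < r \<Longrightarrow> r < t1 \<Longrightarrow> isCont (JJ s x z) r"
  using JJ_der has_vector_derivative_continuous by blast
lemma JJ1_cont: "t0 < r \<Longrightarrow> r < t1 \<Longrightarrow> isCont (JJ1 s x z) r"
  using JJ1_der has_vector_derivative_continuous by blast
lemma JJ2_cont: assumes r: "t0 < r" "r < t1" shows "isCont (JJ2 s x z) r"
proof -
  have c1: "isCont (\<lambda>r. DA 2 r *v y) r" for y using derv23_int[OF r] has_vector_derivative_continuous by blast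
  have c2: "isCont (\<lambda>r. DA 1 r *v y) r" for y using derv12_int[OF r] has_vector_derivative_continuous by blast
  show ?thesis unfolding JJ2_def[abs_def] by (intro continuous_intros c1 c2)
qed

lemma phi_der: assumes r: "t0 < r" "r < t1" shows "(phi s x z has_real_derivative phi1 s x z r) (at r)"
proof -
  have "((\<lambda>r. JJ s x z r \<bullet> JJ s x z r) has_real_derivative
      (JJ s x z r \<bullet> JJ1 s x z r + JJ1 s x z r \<bullet> JJ s x z r)) (at r)"
    by (intro hvd_inner JJ_der r)
  then have "(phi s x z has_real_derivative
      (0 + 2 * (1 * (v \<bullet> z)) - (JJ s x z r \<bullet> JJ1 s x z r + JJ1 s x z r \<bullet> JJ s x z r))) (at r)"
    unfolding phi_def[abs_def] by (intro derivative_eq_intros) auto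
  then show ?thesis by (simp add: phi1_def inner_commute)
qed

lemma phi1_der: assumes r: "t0 < r" "r < t1" shows "(phi1 s x z has_real_derivative phi2 s x z r) (at r)"
proof -
  have "((\<lambda>r. JJ s x z r \<bullet> JJ1 s x z r) has_real_derivative
      (JJ s x z r \<bullet> JJ2 s x z r + JJ1 s x z r \<bullet> JJ1 s x z r)) (at r)"
    by (intro hvd_inner JJ_der JJ1_der r)
  then have "(phi1 s x z has_real_derivative
      (0 - 2 * (JJ s x z r \<bullet> JJ2 s x z r + JJ1 s x z r \<bullet> JJ1 s x z r))) (at r)"
    unfolding phi1_def[abs_def] by (rule DERIV_diff[OF DERIV_const DERIV_cmult])
  moreover have "0 - 2 * (JJ s x z r \<bullet> JJ2 s x z r + JJ1 s x z r \<bullet> JJ1 s x z r) = phi2 s x z r"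
    by (simp add: phi2_def algebra_simps)
  ultimately show ?thesis by simp
qed

lemma phi2_cont: assumes r: "t0 < r" "r < t1" shows "isCont (phi2 s x z) r"
  unfolding phi2_def[abs_def] by (intro continuous_intros JJ_cont JJ1_cont JJ2_cont r)

lemma phi_le_H: assumes r: "r \<in> {t0..t1}" shows "phi s x z r \<le> H r"
proof -
  have "DA 0 r *v (x + (r - s) *\<^sub>R z) = JJ s x z r"
    by (simp add: JJ_def matrix_vector_right_distrib matrix_vector_mult_scaleR)
  moreover have "v \<bullet> (x + (r - s) *\<^sub>R z) = v \<bullet> x + (r - s) * (v \<bullet> z)"
    by (simp add: inner_add_right)
  ultimately show ?thesis using H_ge[OF r, of "x + (r - s) *\<^sub>R z"]
    by (simp add: phi_def algebra_simps)
qed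

lemma phi_at: assumes s: "s \<in> {t0..t1}" and x: "maxi s x" shows "phi s x z s = H s"
  using maxi_inner[OF x, of x] H_eq[OF s x] by (simp add: phi_def JJ_def)

lemma phi2_at:
  assumes s: "s \<in> {t0..t1}" and xz: "DA 1 s *v x = DA 0 s *v z0"
  shows "phi2 s x ((-2) *\<^sub>R z0) s = 6 * ((DA 1 s *v x) \<bullet> (DA 1 s *v x)) + 2 * ((DA 0 s *v x) \<bullet> (R s *v (DA 0 s *v x)))"
proof -
  let ?P = "DA 1 s *v x" and ?Y = "DA 0 s *v x"
  have az: "DA 0 s *v ((-2) *\<^sub>R z0) = (-2) *\<^sub>R ?P"
    using xz by (simp only: matrix_vector_mult_scaleR)
  have j1: "JJ1 s x ((-2) *\<^sub>R z0) s = - ?P"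
    unfolding JJ1_def az by (simp add: scaleR_2 algebra_simps)
  have a1z: "DA 1 s *v ((-2) *\<^sub>R z0) = (-2) *\<^sub>R (DA 1 s *v z0)"
    by (simp only: matrix_vector_mult_scaleR)
  have j2: "JJ2 s x ((-2) *\<^sub>R z0) s = - (R s *v ?Y) - 4 *\<^sub>R (DA 1 s *v z0)"
    unfolding JJ2_def a1z jac[OF s, of x] by (simp add: algebra_simps)
  have j: "JJ s x ((-2) *\<^sub>R z0) s = ?Y" by (simp add: JJ_def)
  have l: "?Y \<bullet> (DA 1 s *v z0) = ?P \<bullet> ?P"
    using lagr[OF s, of z0 x] xz by (simp add: inner_commute)
  show ?thesis
    unfolding phi2_def j1 j2 j using l by (simp add: inner_diff_right inner_minus_right algebra_simps)
qed

lemma H_LS: "LS t0 t1 H"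
  unfolding LS_def
proof (intro allI impI)
  fix s assume s': "t0 < s \<and> s < t1"
  then have s: "s \<in> {t0..t1}" by auto
  obtain x z0 where x: "maxi s x" and xz: "DA 1 s *v x = DA 0 s *v z0" using adjust[OF s] by blast
  let ?z = "(-2) *\<^sub>R z0"
  have p2: "phi2 s x ?z s \<ge> 0"
    using phi2_at[OF s xz] R_nonneg[OF s, of "DA 0 s *v x"] by simp
  show "\<exists>cc. \<forall>\<epsilon>>0. \<exists>\<delta>>0. \<forall>r. t0 \<le> r \<and> r \<le> t1 \<and> \<bar>r - s\<bar> < \<delta> \<longrightarrow> H s + cc * (r - s) - \<epsilon> * (r - s)\<^sup>2 \<le> H r"
  proof (rule exI[of _ "phi1 s x ?z s"], intro allI impI)
    fix \<epsilon> :: real assume ep: "\<epsilon> > 0"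
    obtain \<delta> where \<delta>: "\<delta> > 0" and hl: "\<And>r. \<bar>r - s\<bar> < \<delta> \<Longrightarrow>
        phi s x ?z s + phi1 s x ?z s * (r - s) + (phi2 s x ?z s / 2 - \<epsilon>) * (r - s)^2 \<le> phi s x ?z r"
      using second_order_lower[of t0 s t1 "phi s x ?z" "phi1 s x ?z" "phi2 s x ?z", OF _ _ phi_der phi1_der phi2_cont ep] s'
      by blast
    show "\<exists>\<delta>>0. \<forall>r. t0 \<le> r \<and> r \<le> t1 \<and> \<bar>r - s\<bar> < \<delta> \<longrightarrow> H s + phi1 s x ?z s * (r - s) - \<epsilon> * (r - s)\<^sup>2 \<le> H r"
    proof (intro exI conjI allI impI)
      show "\<delta> > 0" by fact
      fix r assume r: "t0 \<le> r \<and> r \<le> t1 \<and> \<bar>r - s\<bar> < \<delta>"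
      have "(phi2 s x ?z s / 2) * (r - s)^2 \<ge> 0" using p2 by simp
      then have "H s + phi1 s x ?z s * (r - s) - \<epsilon> * (r - s)\<^sup>2 \<le> phi s x ?z r"
        using hl[of r] r phi_at[OF s x, of ?z] by (simp add: algebra_simps)
      also have "\<dots> \<le> H r" using phi_le_H[of r] r by simp
      finally show "H s + phi1 s x ?z s * (r - s) - \<epsilon> * (r - s)\<^sup>2 \<le> H r" .
    qed
  qed
qed

lemma good_point:
  assumes Hc: "\<And>r. r \<in> {t0..t1} \<Longrightarrow> H r = c" and s': "t0 < s" "s < t1"
  shows "\<exists>x. maxi s x \<and> DA 1 s *v x = 0 \<and> R s *v (DA 0 s *v x) = 0"
proof -
  have s: "s \<in> {t0..t1}" using s' by auto
  obtain x z0 where x: "maxi s x" and xz: "DA 1 s *v x = DA 0 s *v z0" using adjust[OF s] by blast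
  let ?z = "(-2) *\<^sub>R z0"
  let ?f = "phi s x ?z"
  define d where "d = min (s - t0) (t1 - s)"
  have d: "d > 0" using s' by (simp add: d_def)
  have loc: "?f r \<le> ?f s" if "\<bar>s - r\<bar> < d" for r
  proof -
    have r: "r \<in> {t0..t1}" using that by (auto simp: d_def abs_less_iff)
    have "?f r \<le> H r" by (rule phi_le_H[OF r])
    also have "\<dots> = H s" using Hc r s by simp
    also have "\<dots> = ?f s" using phi_at[OF s x] by simp
    finally show ?thesis .
  qed
  have f1: "phi1 s x ?z s = 0"
    by (rule DERIV_local_max[OF phi_der[OF s'] d]) (use loc in auto)
  have p2le: "phi2 s x ?z s \<le> 0"
  proof (rule ccontr)
    assume "\<not> ?thesis"
    then have pos: "phi2 s x ?z s > 0" by simp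
    define \<epsilon> where "\<epsilon> = phi2 s x ?z s / 4"
    have ep: "\<epsilon> > 0" using pos by (simp add: \<epsilon>_def)
    obtain \<delta> where \<delta>: "\<delta> > 0" and hl: "\<And>r. \<bar>r - s\<bar> < \<delta> \<Longrightarrow>
        ?f s + phi1 s x ?z s * (r - s) + (phi2 s x ?z s / 2 - \<epsilon>) * (r - s)^2 \<le> ?f r"
      using second_order_lower[of t0 s t1 "?f" "phi1 s x ?z" "phi2 s x ?z", OF _ _ phi_der phi1_der phi2_cont ep] s'
      by blast
    define r where "r = s + min (\<delta>/2) (d/2)"
    have rs: "\<bar>r - s\<bar> < \<delta>" "\<bar>s - r\<bar> < d" "r \<noteq> s" using \<delta> d by (auto simp: r_def min_def)
    have "(phi2 s x ?z s / 2 - \<epsilon>) * (r - s)^2 > 0"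
      using pos rs(3) by (simp add: \<epsilon>_def)
    then have "?f s < ?f r" using hl[OF rs(1)] f1 by simp
    with loc[OF rs(2)] show False by simp
  qed
  have P0: "(DA 1 s *v x) \<bullet> (DA 1 s *v x) = 0" and RY: "(DA 0 s *v x) \<bullet> (R s *v (DA 0 s *v x)) = 0"
    using p2le phi2_at[OF s xz] R_nonneg[OF s, of "DA 0 s *v x"]
      inner_ge_zero[of "DA 1 s *v x"] by linarith+
  have "R s *v (DA 0 s *v x) = 0"
    by (rule psd_zero[OF R_sym[OF s] R_nonneg[OF s] RY])
  with P0 x show ?thesis by auto
qed

end

lemma transpose_add: "transpose (A + B) = transpose A + transpose (B :: real^'n^'m)"
  by (simp add: transpose_def vec_eq_iff)

lemma bounded_linear_transpose: "bounded_linear (transpose :: real^'n^'m \<Rightarrow> real^'m^'n)"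
proof -
  have "linear (transpose :: real^'n^'m \<Rightarrow> real^'m^'n)"
    by (auto simp: linear_iff transpose_add transpose_scalar)
  then show ?thesis by (simp add: linear_conv_bounded_linear)
qed

lemma bounded_bilinear_mv: "bounded_bilinear (\<lambda>(M::real^'n^'m) (x::real^'n). M *v x)"
proof (rule bounded_bilinear.intro)
  fix a a' :: "real^'n^'m" and b b' :: "real^'n" and r :: real
  show "(a + a') *v b = a *v b + a' *v b" by (simp add: matrix_vector_mult_add_rdistrib)
  show "a *v (b + b') = a *v b + a *v b'" by (simp add: matrix_vector_right_distrib)
  show "(r *\<^sub>R a) *v b = r *\<^sub>R (a *v b)" by (simp add: scaleR_matrix_vector_assoc)
  show "a *v (r *\<^sub>R b) = r *\<^sub>R (a *v b)" by (simp add: matrix_vector_mult_scaleR)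
next
  show "\<exists>K. \<forall>a b. norm ((a::real^'n^'m) *v b) \<le> norm a * norm b * K"
    by (rule exI[of _ "real CARD('m) * real CARD('n)"]) (metis mv_norm_le mult.commute mult.assoc)
qed

lemma matrix_inv_works:
  fixes M :: "real^'n^'n"
  assumes "invertible M"
  shows "M ** matrix_inv M = mat 1 \<and> matrix_inv M ** M = mat 1"
  using assms unfolding invertible_def matrix_inv_def by (rule someI_ex)

context vsetup
begin

lemma inv_adj_props:
  assumes t: "t \<in> {t0..t1}" and inv: "invertible (DA 0 t)"
  shows "transpose (DA 0 t) *v (inv_adj (DA 0 t) *v v) = v"
    and "norm (inv_adj (DA 0 t) *v v) = sqrt (H t)"
proof -
  let ?Y = "inv_adj (DA 0 t) *v v"
  have iT: "invertible (transpose (DA 0 t))" by (rule transpose_invertible[OF inv])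
  have inv1: "M *v (matrix_inv M *v y) = y" if "invertible M" for M :: "real^'n^'n" and y
    using matrix_inv_works[OF that] by (metis matrix_vector_mul_assoc matrix_vector_mul_lid)
  show YT: "transpose (DA 0 t) *v ?Y = v"
    unfolding inv_adj_def by (rule inv1[OF iT])
  define x where "x = matrix_inv (DA 0 t) *v ?Y"
  have Ax: "DA 0 t *v x = ?Y"
    unfolding x_def by (rule inv1[OF inv])
  have "maxi t x" unfolding maxi_def Ax YT ..
  then have "H t = ?Y \<bullet> ?Y" using H_eq[OF t] Ax by simp
  then show "norm ?Y = sqrt (H t)" by (simp add: norm_eq_sqrt_inner)
qed

lemma nontriv_end: "at t0 within {t0..t1} \<noteq> bot" "at t1 within {t0..t1} \<noteq> bot"
  using at_within_Icc_at_right[OF t01] at_within_Icc_at_left[OF t01] by auto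

lemma H_deriv_end:
  fixes g :: "real \<Rightarrow> real"
  assumes gc: "continuous_on {t0..t1} g"
    and gf: "\<And>t. t \<in> {t0..t1} \<Longrightarrow> invertible (DA 0 t) \<Longrightarrow> g t = (norm v)\<^sup>2 / norm (inv_adj (DA 0 t) *v v)"
    and gd: "(g has_real_derivative 0) (at a within {t0..t1})"
    and a: "a = t0 \<or> a = t1"
  shows "(H has_real_derivative 0) (at a within {t0..t1})"
proof -
  have aI: "a \<in> {t0..t1}" using a t01 by auto
  have nt: "at a within {t0..t1} \<noteq> bot" using a nontriv_end by auto
  define nv where "nv = (norm v)\<^sup>2"
  have nv: "nv > 0" using v_nz by (simp add: nv_def)
  define G where "G t = nv / sqrt (H t)" for t
  obtain \<delta> where \<delta>: "\<delta> > 0" and iso: "\<And>r. r \<in> {t0..t1} \<Longrightarrow> r \<noteq> a \<Longrightarrow> \<bar>r - a\<bar> < \<delta> \<Longrightarrow> invertible (DA 0 r)"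
    using isolated[OF aI] by blast
  have gG: "g r = G r" if "r \<in> {t0..t1}" "r \<noteq> a" "\<bar>r - a\<bar> < \<delta>" for r
    using gf[OF that(1) iso[OF that]] inv_adj_props(2)[OF that(1) iso[OF that]] by (simp add: G_def nv_def)
  have Gc: "continuous_on {t0..t1} G"
    unfolding G_def using H_pos by (intro continuous_intros H_cont) (auto dest: H_pos)
  have l1: "(g \<longlongrightarrow> g a) (at a within {t0..t1})"
    using gc aI by (simp add: continuous_on_def)
  have l2: "(G \<longlongrightarrow> G a) (at a within {t0..t1})"
    using Gc aI by (simp add: continuous_on_def)
  have ev: "\<forall>\<^sub>F r in at a within {t0..t1}. g r = G r"
    unfolding eventually_at using \<delta> by (intro exI[of _ \<delta>]) (auto simp: dist_real_def gG)
  have "(G \<longlongrightarrow> g a) (at a within {t0..t1})" by (rule Lim_transform_eventually[OF l1 ev])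
  then have gaG: "g a = G a" using tendsto_unique[OF nt _ l2] by simp
  have Hg: "H r = nv^2 / (g r)^2" if "r \<in> {t0..t1}" "dist r a < \<delta>" for r
  proof -
    have "g r = G r" using gG[of r] gaG that by (cases "r = a") (auto simp: dist_real_def)
    moreover have Hp: "H r > 0" using H_pos[OF that(1)] .
    ultimately have "(g r)^2 = nv^2 / H r" by (simp add: G_def power_divide)
    then have "H r * (g r)^2 = nv^2" using Hp by (simp add: field_simps)
    moreover then have "(g r)^2 \<noteq> 0" using nv by auto
    ultimately show ?thesis by (simp add: eq_divide_eq)
  qed
  have ga0: "g a \<noteq> 0" using gaG nv H_pos[OF aI] by (simp add: G_def)
  have "((\<lambda>r. nv^2 / (g r)^2) has_real_derivative 0) (at a within {t0..t1})"
    using gd ga0 by (auto intro!: derivative_eq_intros)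
  then show ?thesis
    by (rule has_field_derivative_transform_within[OF _ \<delta> aI]) (simp add: Hg)
qed

lemma H_const:
  fixes g :: "real \<Rightarrow> real"
  assumes gc: "continuous_on {t0..t1} g"
    and gf: "\<And>t. t \<in> {t0..t1} \<Longrightarrow> invertible (DA 0 t) \<Longrightarrow> g t = (norm v)\<^sup>2 / norm (inv_adj (DA 0 t) *v v)"
    and g0: "(g has_real_derivative 0) (at t0 within {t0..t1})"
    and g1: "(g has_real_derivative 0) (at t1 within {t0..t1})"
  shows "\<And>r. r \<in> {t0..t1} \<Longrightarrow> H r = H t0"
  by (rule ls_const[OF t01 H_cont H_LS H_deriv_end[OF gc gf g0] H_deriv_end[OF gc gf g1]]) auto

lemma coercive:
  "\<exists>c>0. \<forall>r\<in>{t0..t1}. \<forall>k. c * (k \<bullet> k) \<le> (DA 0 r *v k) \<bullet> (DA 0 r *v k) + (DA 1 r *v k) \<bullet> (DA 1 r *v k)"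
proof -
  define S where "S = {t0..t1} \<times> sphere (0::real^'n) 1"
  define f where "f p = (DA 0 (fst p) *v snd p) \<bullet> (DA 0 (fst p) *v snd p) + (DA 1 (fst p) *v snd p) \<bullet> (DA 1 (fst p) *v snd p)" for p
  have cS: "compact S" unfolding S_def by (intro compact_Times compact_Icc compact_sphere)
  obtain e :: "real^'n" where e: "norm e = 1" using vector_choose_size[of 1] by auto
  have nS: "S \<noteq> {}" using e t01 unfolding S_def by (auto intro!: exI[of _ "(t0, e)"])
  have c0: "continuous_on S (\<lambda>p. DA k (fst p))" for k
    by (rule continuous_on_compose2[OF contA continuous_on_fst[OF continuous_on_id]]) (auto simp: S_def)
  have c1: "continuous_on S (\<lambda>p. DA k (fst p) *v snd p)" for k
    by (rule bounded_bilinear.continuous_on[OF bounded_bilinear_mv c0 continuous_on_snd[OF continuous_on_id]])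
  have cf: "continuous_on S f" unfolding f_def by (intro continuous_intros c1 continuous_on_id)
  obtain p0 where p0: "p0 \<in> S" and pmin: "\<And>p. p \<in> S \<Longrightarrow> f p0 \<le> f p"
    using continuous_attains_inf[OF cS nS cf] by blast
  have fpos: "f p0 > 0"
  proof -
    obtain r0 k0 where rk: "p0 = (r0, k0)" by (cases p0)
    have r0: "r0 \<in> {t0..t1}" and k0: "norm k0 = 1" using p0 rk by (auto simp: S_def)
    have "f p0 \<ge> 0" by (simp add: f_def)
    moreover have "f p0 \<noteq> 0"
    proof
      assume "f p0 = 0"
      then have "DA 0 r0 *v k0 = 0" "DA 1 r0 *v k0 = 0" by (auto simp: f_def rk add_nonneg_eq_0_iff)
      then have "k0 = 0" by (rule nondeg[OF r0])
      with k0 show False by simp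
    qed
    ultimately show ?thesis by simp
  qed
  have "c * (k \<bullet> k) \<le> (DA 0 r *v k) \<bullet> (DA 0 r *v k) + (DA 1 r *v k) \<bullet> (DA 1 r *v k)"
    if r: "r \<in> {t0..t1}" and c: "c = f p0" for r k c
  proof (cases "k = 0")
    case True then show ?thesis by simp
  next
    case False
    define u where "u = (1 / norm k) *\<^sub>R k"
    have "(r, u) \<in> S" using False r by (simp add: S_def u_def)
    then have "c \<le> f (r, u)" using pmin c by simp
    also have "f (r, u) = ((DA 0 r *v k) \<bullet> (DA 0 r *v k) + (DA 1 r *v k) \<bullet> (DA 1 r *v k)) / (k \<bullet> k)"
      using False by (simp add: f_def u_def matrix_vector_mult_scaleR power2_norm_eq_inner[symmetric]
          power2_eq_square add_divide_distrib)
    finally show ?thesis using False by (simp add: pos_le_divide_eq)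
  qed
  then show ?thesis using fpos by blast
qed

end

lemma sq_bound_aux:
  fixes a b m c :: real
  assumes c: "c > 0" and nn: "a \<ge> 0" "b \<ge> 0" "m \<ge> 0" and h: "c * m^2 \<le> m * a + b^2"
  shows "m^2 \<le> (4 / c^2 + 2 / c) * (a^2 + b^2)"
proof -
  have "m^2 \<le> 4 * a^2 / c^2 + 2 * b^2 / c"
  proof (cases "m \<le> 2 * a / c")
    case True
    then have "m^2 \<le> (2 * a / c)^2" using nn by (intro power_mono) auto
    also have "\<dots> = 4 * a^2 / c^2" by (simp add: power_divide power_mult_distrib)
    finally show ?thesis using c nn by (smt (verit) divide_nonneg_nonneg zero_le_power2)
  next
    case False
    then have "a < c * m / 2" using c by (simp add: field_simps)
    then have "m * a \<le> m * (c * m / 2)" using nn by (intro mult_left_mono) auto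
    then have "c * m^2 \<le> c * m^2 / 2 + b^2" using h by (simp add: power2_eq_square algebra_simps)
    then have "m^2 \<le> 2 * b^2 / c" using c by (simp add: field_simps)
    then show ?thesis using c nn by (smt (verit) divide_nonneg_nonneg zero_le_power2)
  qed
  also have "\<dots> \<le> (4 / c^2 + 2 / c) * (a^2 + b^2)"
  proof -
    have "4 * a^2 / c^2 \<le> 4 / c^2 * (a^2 + b^2)" using c by (simp add: field_simps)
    moreover have "2 * b^2 / c \<le> 2 / c * (a^2 + b^2)" using c by (simp add: field_simps)
    ultimately show ?thesis by (simp add: distrib_right)
  qed
  finally show ?thesis .
qed

context vsetup
begin

lemma lagr_T: assumes t: "t \<in> {t0..t1}"
  shows "transpose (DA 1 t) *v (DA 0 t *v w) = transpose (DA 0 t) *v (DA 1 t *v w)"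
proof (rule transpose_from_inner)
  fix y
  show "(DA 1 t *v y) \<bullet> (DA 0 t *v w) = y \<bullet> (transpose (DA 0 t) *v (DA 1 t *v w))"
    using lagr[OF t, of y w] mv_transpose_inner[of "DA 0 t" y "DA 1 t *v w"] by simp
qed

lemma final_w:
  assumes good: "\<And>s. t0 < s \<Longrightarrow> s < t1 \<Longrightarrow> \<exists>x. maxi s x \<and> DA 1 s *v x = 0 \<and> R s *v (DA 0 s *v x) = 0"
  shows "\<exists>w. \<forall>r\<in>{t0..t1}. maxi r w \<and> DA 1 r *v w = 0"
proof -
  define tm where "tm = (t0 + t1) / 2"
  have tm: "t0 < tm" "tm < t1" using t01 by (auto simp: tm_def)
  obtain w where w: "maxi tm w" "DA 1 tm *v w = 0" using good[OF tm] by blast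
  have cT: "continuous_on {t0..t1} (\<lambda>r. transpose (DA 0 r))"
    by (rule bounded_linear.continuous_on[OF bounded_linear_transpose contA])
  obtain BT where BT: "BT \<ge> 0" "\<And>t y. t \<in> {t0..t1} \<Longrightarrow> norm (transpose (DA 0 t) *v y) \<le> BT * norm y"
    using mbound[OF cT] by blast
  obtain BA where BA: "BA \<ge> 0" "\<And>t y. t \<in> {t0..t1} \<Longrightarrow> norm (DA 0 t *v y) \<le> BA * norm y"
    using mbound[OF contA] by blast
  obtain BR where BR: "BR \<ge> 0" "\<And>t y. t \<in> {t0..t1} \<Longrightarrow> norm (R t *v y) \<le> BR * norm y"
    using mbound[OF R_cont] by blast
  obtain c where c: "c > 0" "\<And>r k. r \<in> {t0..t1} \<Longrightarrow> c * (k \<bullet> k) \<le> (DA 0 r *v k) \<bullet> (DA 0 r *v k) + (DA 1 r *v k) \<bullet> (DA 1 r *v k)"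
    using coercive by blast
  define K where "K = BR * BA"
  have K: "K \<ge> 0" using BR BA by (simp add: K_def)
  define D where "D = 4 / c^2 + 2 / c"
  have D: "D \<ge> 0" using c by (simp add: D_def)
  define C where "C = 2 * BT + K * (1 + D)"
  define Q where "Q r = transpose (DA 0 r) *v (DA 0 r *v w) - v" for r
  define Q' where "Q' r = transpose (DA 0 r) *v (DA 1 r *v w) + transpose (DA 1 r) *v (DA 0 r *v w)" for r
  define P where "P r = DA 1 r *v w" for r
  define e where "e r = Q r \<bullet> Q r + P r \<bullet> P r" for r
  define e' where "e' r = 2 * (Q r \<bullet> Q' r) + 2 * (P r \<bullet> (DA 2 r *v w))" for r
  have cQ: "continuous_on {t0..t1} Q"
    unfolding Q_def[abs_def]
    by (intro continuous_intros bounded_bilinear.continuous_on[OF bounded_bilinear_mv cT contAv])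
  have ce: "continuous_on {t0..t1} e"
    unfolding e_def[abs_def] P_def by (intro continuous_intros cQ contAv)
  have de: "(e has_real_derivative e' r) (at r)" if r: "t0 < r" "r < t1" for r
  proof -
    have rI: "r \<in> {t0..t1}" using r by simp
    have dA: "(DA 0 has_vector_derivative DA 1 r) (at r)" using der[OF rI, of 0] at_int[OF r] by simp
    have dT: "((\<lambda>r. transpose (DA 0 r)) has_vector_derivative transpose (DA 1 r)) (at r)"
      by (rule bounded_linear.has_vector_derivative[OF bounded_linear_transpose dA])
    have dM: "((\<lambda>r. transpose (DA 0 r) *v (DA 0 r *v w)) has_vector_derivative Q' r) (at r)"
      using bounded_bilinear.has_vector_derivative[OF bounded_bilinear_mv dT derv01_int[OF r, of w]]
      by (simp add: Q'_def)
    have dQ: "(Q has_vector_derivative Q' r) (at r)"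
      unfolding Q_def[abs_def] using has_vector_derivative_diff[OF dM has_vector_derivative_const[of v]] by simp
    have dP: "(P has_vector_derivative DA 2 r *v w) (at r)"
      unfolding P_def[abs_def] by (rule derv12_int[OF r])
    have "(e has_real_derivative (Q r \<bullet> Q' r + Q' r \<bullet> Q r) + (P r \<bullet> (DA 2 r *v w) + (DA 2 r *v w) \<bullet> P r)) (at r)"
      unfolding e_def[abs_def] by (intro DERIV_add hvd_inner dQ dP)
    then show ?thesis by (simp add: e'_def inner_commute)
  qed
  have bd: "\<bar>e' r\<bar> \<le> C * e r" if r: "t0 < r" "r < t1" for r
  proof -
    have rI: "r \<in> {t0..t1}" using r by simp
    obtain xr where xr: "maxi r xr" "DA 1 r *v xr = 0" "R r *v (DA 0 r *v xr) = 0" using good[OF r] by blast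
    define k where "k = w - xr"
    have Qk: "Q r = transpose (DA 0 r) *v (DA 0 r *v k)"
      using xr(1) by (simp add: Q_def k_def maxi_def matrix_vector_mult_diff_distrib)
    have Pk: "P r = DA 1 r *v k" using xr(2) by (simp add: P_def k_def matrix_vector_mult_diff_distrib)
    have Q'eq: "Q' r = 2 *\<^sub>R (transpose (DA 0 r) *v P r)"
      using lagr_T[OF rI, of w] by (simp add: Q'_def P_def scaleR_2)
    have A2k: "DA 2 r *v w = - (R r *v (DA 0 r *v k))"
      using jac[OF rI, of w] xr(3) by (simp add: k_def matrix_vector_mult_diff_distrib)
    let ?a = "norm (Q r)" and ?b = "norm (P r)" and ?m = "norm k"
    have ee: "e r = ?a^2 + ?b^2" by (simp add: e_def power2_norm_eq_inner)
    have nQ': "norm (Q' r) \<le> 2 * BT * ?b" using BT(2)[OF rI, of "P r"] BT(1) by (simp add: Q'eq)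
    have nA2: "norm (DA 2 r *v w) \<le> K * ?m"
    proof -
      have "norm (DA 2 r *v w) \<le> BR * norm (DA 0 r *v k)" using BR(2)[OF rI] by (simp add: A2k)
      also have "\<dots> \<le> BR * (BA * ?m)" using BA(2)[OF rI, of k] BR(1) by (intro mult_left_mono) auto
      finally show ?thesis by (simp add: K_def mult.assoc)
    qed
    have Ak: "(DA 0 r *v k) \<bullet> (DA 0 r *v k) \<le> ?m * ?a"
    proof -
      have "(DA 0 r *v k) \<bullet> (DA 0 r *v k) = k \<bullet> Q r" by (simp add: Qk mv_transpose_inner)
      also have "\<dots> \<le> ?m * ?a" by (rule order_trans[OF abs_ge_self Cauchy_Schwarz_ineq2])
      finally show ?thesis .
    qed
    have "c * ?m^2 \<le> ?m * ?a + ?b^2"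
      using c(2)[OF rI, of k] Ak by (simp add: Pk power2_norm_eq_inner)
    then have m2: "?m^2 \<le> D * e r" unfolding ee D_def by (rule sq_bound_aux[OF c(1) norm_ge_zero norm_ge_zero norm_ge_zero])
    have "\<bar>e' r\<bar> \<le> 2 * (?a * norm (Q' r)) + 2 * (?b * norm (DA 2 r *v w))"
      unfolding e'_def using Cauchy_Schwarz_ineq2[of "Q r" "Q' r"] Cauchy_Schwarz_ineq2[of "P r" "DA 2 r *v w"]
      by linarith
    also have "\<dots> \<le> 2 * (?a * (2 * BT * ?b)) + 2 * (?b * (K * ?m))"
      using nQ' nA2 by (intro add_mono mult_left_mono) auto
    also have "\<dots> = BT * (2 * (2 * ?a * ?b)) + K * (2 * ?b * ?m)" by (simp add: algebra_simps)
    also have "\<dots> \<le> BT * (2 * (?a^2 + ?b^2)) + K * (?b^2 + ?m^2)"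
      using BT(1) K by (intro add_mono mult_left_mono) (auto simp: sum_squares_bound)
    also have "\<dots> \<le> BT * (2 * e r) + K * (e r + D * e r)"
      using m2 K ee BT(1) by (intro add_mono mult_left_mono) auto
    also have "\<dots> = C * e r" by (simp add: C_def algebra_simps)
    finally show ?thesis .
  qed
  have e0: "e tm = 0" using w by (simp add: e_def Q_def P_def maxi_def)
  have ez: "e r = 0" if "r \<in> {t0..t1}" for r
    by (rule gronwall_zero[of t0 t1 e e' C tm, OF _ ce de bd _ _ _ e0]) (use t01 tm that in \<open>auto simp: e_def\<close>)
  have "maxi r w \<and> DA 1 r *v w = 0" if "r \<in> {t0..t1}" for r
    using ez[OF that] by (simp add: e_def Q_def P_def maxi_def add_nonneg_eq_0_iff)
  then show ?thesis by blast
qed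

end

theorem proposition3p1:
  fixes t0 t1 :: real and R :: "real \<Rightarrow> real^'n^'n" and DA :: "nat \<Rightarrow> real \<Rightarrow> real^'n^'n"
    and v :: "real^'n"
  assumes t01: "t0 < t1"
    and R_smooth: "smooth_on_real {t0..t1} R"
    and R_sym: "\<forall>t\<in>{t0..t1}. transpose (R t) = R t"
    and R_nonneg: "\<forall>t\<in>{t0..t1}. \<forall>x. 0 \<le> x \<bullet> (R t *v x)"
    and lag: "lagrange_tensor t0 t1 R DA"
    and v_nz: "v \<noteq> 0"
    and v_perp: "\<forall>t\<in>{t0..t1}. \<forall>x. DA 0 t *v x = 0 \<longrightarrow> v \<bullet> x = 0"
    and g_crit: "\<exists>g :: real \<Rightarrow> real.
        continuous_on {t0..t1} g \<and>
        (\<forall>t\<in>{t0..t1}. invertible (DA 0 t) \<longrightarrow>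
            g t = (norm v)\<^sup>2 / norm (inv_adj (DA 0 t) *v v)) \<and>
        (g has_real_derivative 0) (at t0 within {t0..t1}) \<and>
        (g has_real_derivative 0) (at t1 within {t0..t1})"
  shows "\<exists>w :: real^'n.
      (\<forall>t\<in>{t0..t1}. invertible (DA 0 t) \<longrightarrow>
          matrix_inv (DA 0 t) *v (inv_adj (DA 0 t) *v v) = w) \<and>
      (\<forall>t\<in>{t0..t1}. DA 1 t *v w = 0) \<and>
      (\<forall>t\<in>{t0..t1}. invertible (DA 0 t) \<longrightarrow> inv_adj (DA 0 t) *v v = DA 0 t *v w) \<and>
      (\<forall>t\<in>{t0..t1}. ((\<lambda>s. DA 0 s *v w) has_vector_derivative 0) (at t within {t0..t1})) \<and>
      (\<forall>t\<in>{t0..t1}. DA 2 t *v w + R t *v (DA 0 t *v w) = 0)"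
proof -
  obtain g where gc: "continuous_on {t0..t1} g"
    and gf: "\<forall>t\<in>{t0..t1}. invertible (DA 0 t) \<longrightarrow> g t = (norm v)\<^sup>2 / norm (inv_adj (DA 0 t) *v v)"
    and g0: "(g has_real_derivative 0) (at t0 within {t0..t1})"
    and g1: "(g has_real_derivative 0) (at t1 within {t0..t1})"
    using g_crit by blast
  have Rc: "continuous_on {t0..t1} R"
  proof -
    obtain D where D: "D 0 = R" "deriv_tower_on {t0..t1} D"
      using R_smooth unfolding smooth_on_real_def by blast
    have "\<forall>t\<in>{t0..t1}. (D 0 has_vector_derivative D (Suc 0) t) (at t within {t0..t1})"
      using D(2) unfolding deriv_tower_on_def by blast
    then show ?thesis using D(1) unfolding continuous_on_eq_continuous_within
      using has_vector_derivative_continuous by blast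
  qed
  interpret vsetup t0 t1 R DA v
    by unfold_locales (use t01 Rc R_sym R_nonneg lag v_nz v_perp in auto)
  have Hc: "\<And>r. r \<in> {t0..t1} \<Longrightarrow> H r = H t0"
    by (rule H_const[OF gc _ g0 g1]) (use gf in auto)
  obtain w where w: "\<And>r. r \<in> {t0..t1} \<Longrightarrow> maxi r w \<and> DA 1 r *v w = 0"
    using final_w[OF good_point[OF Hc]] by blast
  have Aw: "inv_adj (DA 0 t) *v v = DA 0 t *v w" if t: "t \<in> {t0..t1}" "invertible (DA 0 t)" for t
  proof -
    have "transpose (DA 0 t) *v (inv_adj (DA 0 t) *v v) = transpose (DA 0 t) *v (DA 0 t *v w)"
      using inv_adj_props(1)[OF t] w[OF t(1)] unfolding maxi_def by simp
    then show ?thesis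
      by (rule injD[OF inj_matrix_vector_mult[OF transpose_invertible[OF t(2)]]])
  qed
  have c1: "\<forall>t\<in>{t0..t1}. invertible (DA 0 t) \<longrightarrow> matrix_inv (DA 0 t) *v (inv_adj (DA 0 t) *v v) = w"
  proof (intro ballI impI)
    fix t assume t: "t \<in> {t0..t1}" "invertible (DA 0 t)"
    show "matrix_inv (DA 0 t) *v (inv_adj (DA 0 t) *v v) = w"
      unfolding Aw[OF t] using matrix_inv_works[OF t(2)]
      by (metis matrix_vector_mul_assoc matrix_vector_mul_lid)
  qed
  have c2: "\<forall>t\<in>{t0..t1}. DA 1 t *v w = 0" using w by blast
  have c3: "\<forall>t\<in>{t0..t1}. invertible (DA 0 t) \<longrightarrow> inv_adj (DA 0 t) *v v = DA 0 t *v w"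
    using Aw by blast
  have c4: "\<forall>t\<in>{t0..t1}. ((\<lambda>s. DA 0 s *v w) has_vector_derivative 0) (at t within {t0..t1})"
  proof
    fix t assume t: "t \<in> {t0..t1}"
    show "((\<lambda>s. DA 0 s *v w) has_vector_derivative 0) (at t within {t0..t1})"
      using derv01[OF t, of w] c2 t by simp
  qed
  have c5: "\<forall>t\<in>{t0..t1}. DA 2 t *v w + R t *v (DA 0 t *v w) = 0"
    using jac by simp
  show ?thesis using c1 c2 c3 c4 c5 by blast
qed

end
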